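(* Let $f$, $g$, $\xi$, $F$ satisfy the standing assumptions below, and let $x$ be the unique continuous solution of $x'(t)=-f(x(t))+g(t)$, $t>0$, $x(0)=\xi$. Suppose that \[ \lim_{t\to\infty}\frac{g(t)}{f(F^{-1}(t))}=+\infty, \] that $f\in\mathrm{RV}_0(\beta)$ for some $\beta>1$, that $g\in\mathrm{RV}_\infty(-\theta)$ for some $\theta\ge0$, and that $x(t)\to0$ as $t\to\infty$. (i) If $\theta>0$, then $\lim_{t\to\infty}f(x(t))/g(t)=1$. (ii) If $\theta=0$ and there is a decreasing function $\gamma_1$ with $\lim_{t\to\infty}g(t)/\gamma_1(t)=1$, then $\lim_{t\to\infty}f(x(t))/g(t)=1$.
   Context: Standing assumptions: $f\in C(\mathbb{R};\mathbb{R})$ is locally Lipschitz continuous on $\mathbb{R}$, $f(0)=0$ and $xf(x)>0$ for $x\neq0$; $g\in C([0,\infty);\mathbb{R})$ with $g(t)>0$ for $t>0$; $\xi>0$. $F(x)=\int_x^1 \frac{du}{f(u)}$ for $x>0$, with $\lim_{x\to0^+}F(x)=+\infty$; $F^{-1}$ is the inverse of the strictly decreasing function $F$. $\mathrm{RV}_0(\beta)$: measurable positive $\varphi$ on $(0,\infty)$ with $\varphi(\lambda x)/\varphi(x)\to\lambda^\beta$ as $x\to0^+$ for every $\lambda>0$. $\mathrm{RV}_\infty(\alpha)$: measurable positive $h$ with $h(\lambda t)/h(t)\to\lambda^\alpha$ as $t\to\infty$ for every $\lambda>0$. *)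

theory Defs
  imports "HOL-Analysis.Analysis"
begin

definition loc_lipschitz :: "(real \<Rightarrow> real) \<Rightarrow> bool" where
  "loc_lipschitz f \<longleftrightarrow> (\<forall>a b. \<exists>L. L-lipschitz_on {a..b} f)"

definition Fint :: "(real \<Rightarrow> real) \<Rightarrow> real \<Rightarrow> real" where
  "Fint f x = (if x \<le> 1 then integral {x..1} (\<lambda>u. 1 / f u)
               else - integral {1..x} (\<lambda>u. 1 / f u))"

definition Finv :: "(real \<Rightarrow> real) \<Rightarrow> real \<Rightarrow> real" where
  "Finv f t = (THE y. y > 0 \<and> Fint f y = t)"

definition RV0 :: "(real \<Rightarrow> real) \<Rightarrow> real \<Rightarrow> bool" where
  "RV0 \<phi> \<beta> \<longleftrightarrow> (\<forall>x>0. \<phi> x > 0) \<and> set_borel_measurable borel {0<..} \<phi> \<and>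
     (\<forall>l>0. ((\<lambda>x. \<phi> (l * x) / \<phi> x) \<longlongrightarrow> l powr \<beta>) (at_right 0))"

definition RVinf :: "(real \<Rightarrow> real) \<Rightarrow> real \<Rightarrow> bool" where
  "RVinf h \<alpha> \<longleftrightarrow> (\<forall>t>0. h t > 0) \<and> set_borel_measurable borel {0<..} h \<and>
     (\<forall>l>0. ((\<lambda>t. h (l * t) / h t) \<longlongrightarrow> l powr \<alpha>) at_top)"

end

theory Submission
  imports Defs
begin
lemma uct_additive:
  fixes k :: "real \<Rightarrow> real"
  assumes cont: "continuous_on UNIV k"
    and lim: "\<And>s. ((\<lambda>v. k (v+s) - k v) \<longlongrightarrow> 0) at_top"
    and epos: "\<epsilon> > 0"
  shows "eventually (\<lambda>v. \<forall>s\<in>{0..1}. \<bar>k (v+s) - k v\<bar> \<le> \<epsilon>) at_top"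
proof -
  define \<eta> where "\<eta> = \<epsilon>/3"
  have eta: "\<eta> > 0" using epos by (simp add: \<eta>_def)
  define E where "E n = {s. \<forall>v\<ge>real n. \<bar>k (v+s) - k v\<bar> \<le> \<eta>}" for n :: nat
  have clo: "closed (E n)" for n
  proof -
    have "E n = (\<Inter>v\<in>{real n..}. {s. \<bar>k (v+s) - k v\<bar> \<le> \<eta>})"
      by (auto simp: E_def)
    moreover have "closed {s. \<bar>k (v+s) - k v\<bar> \<le> \<eta>}" for v
      by (intro closed_Collect_le continuous_intros continuous_on_compose2[OF cont]) auto
    ultimately show ?thesis by auto
  qed
  have cov: "\<Union>(range E) = UNIV"
  proof safe
    fix s
    have "eventually (\<lambda>v. \<bar>k (v+s) - k v\<bar> < \<eta>) at_top"
      using lim[of s] eta by (auto simp: tendsto_iff dist_real_def)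
    then obtain N where N: "\<And>v. v \<ge> N \<Longrightarrow> \<bar>k (v+s) - k v\<bar> < \<eta>"
      by (auto simp: eventually_at_top_linorder)
    have "s \<in> E (nat \<lceil>N\<rceil>)"
      unfolding E_def using N by (auto intro!: less_imp_le) (meson N of_nat_ceiling order_trans less_imp_le)
    then show "s \<in> \<Union>(range E)" by auto
  qed auto
  have "\<exists>n. interior (E n) \<noteq> {}"
  proof (rule ccontr)
    assume "\<not> ?thesis"
    then have "euclideanreal interior_of \<Union>(range E) = {}"
      by (intro Baire_category_alt) (auto simp: completely_metrizable_space_euclidean clo euclidean_interior_of)
    then show False using cov by simp
  qed
  then obtain n p where "p \<in> interior (E n)" by auto
  then obtain \<rho>0 where r0: "\<rho>0 > 0" "ball p \<rho>0 \<subseteq> E n"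
    by (auto simp: mem_interior)
  define \<rho> where "\<rho> = \<rho>0/2"
  have rho: "\<rho> > 0" using r0 by (simp add: \<rho>_def)
  have inE: "p + d \<in> E n" if "\<bar>d\<bar> \<le> \<rho>" for d
    using r0 that rho by (intro subsetD[OF r0(2)]) (auto simp: \<rho>_def dist_real_def)
  have unif: "\<bar>k (w+d) - k w\<bar> \<le> 2*\<eta>" if "w \<ge> real n + p" "\<bar>d\<bar> \<le> \<rho>" for w d
  proof -
    have v: "w - p \<ge> real n" using that by simp
    have a: "\<bar>k (w - p + (p+d)) - k (w-p)\<bar> \<le> \<eta>" using inE[OF that(2)] v unfolding E_def by blast
    have b: "\<bar>k (w - p + (p+0)) - k (w-p)\<bar> \<le> \<eta>" using inE[of 0] rho v unfolding E_def by auto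
    have a': "\<bar>k (w + d) - k (w-p)\<bar> \<le> \<eta>" using a by simp
    have b': "\<bar>k w - k (w-p)\<bar> \<le> \<eta>" using b by simp
    from a' b' show ?thesis by linarith
  qed
  define m where "m = nat \<lceil>1/\<rho>\<rceil>"
  have ev1: "eventually (\<lambda>v. \<forall>j\<in>{0..m}. \<bar>k (v + real j*\<rho>) - k v\<bar> \<le> \<eta>) at_top"
  proof (rule eventually_ball_finite)
    show "finite {0..m}" by simp
    show "\<forall>j\<in>{0..m}. eventually (\<lambda>v. \<bar>k (v + real j*\<rho>) - k v\<bar> \<le> \<eta>) at_top"
    proof
      fix j
      have "eventually (\<lambda>v. \<bar>k (v + real j*\<rho>) - k v\<bar> < \<eta>) at_top"
        using lim[of "real j*\<rho>"] eta by (auto simp: tendsto_iff dist_real_def)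
      then show "eventually (\<lambda>v. \<bar>k (v + real j*\<rho>) - k v\<bar> \<le> \<eta>) at_top"
        by eventually_elim auto
    qed
  qed
  have ev2: "eventually (\<lambda>v. v \<ge> real n + p) at_top" by (rule eventually_ge_at_top)
  show ?thesis
    using ev1 ev2
  proof eventually_elim
    case (elim v)
    show ?case
    proof
      fix s :: real assume s: "s \<in> {0..1}"
      define j where "j = nat \<lfloor>s/\<rho>\<rfloor>"
      have sr: "s/\<rho> \<ge> 0" using s rho by auto
      have j1: "real j \<le> s/\<rho>" using sr by (simp add: j_def)
      have j2: "s/\<rho> < real j + 1" using sr by (simp add: j_def)
      have "real j * \<rho> \<le> s" using j1 rho by (simp add: field_simps)
      moreover have "s < real j * \<rho> + \<rho>" using j2 rho by (simp add: field_simps)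
      ultimately have d: "\<bar>s - real j * \<rho>\<bar> \<le> \<rho>" by auto
      have "real j \<le> 1/\<rho>" using j1 s rho by (smt (verit) divide_right_mono atLeastAtMost_iff)
      then have jm: "j \<in> {0..m}" by (simp add: m_def) linarith
      have w: "v + real j * \<rho> \<ge> real n + p" using elim(2) rho by (smt (verit) mult_nonneg_nonneg of_nat_0_le_iff)
      have A: "\<bar>k (v + real j * \<rho> + (s - real j * \<rho>)) - k (v + real j * \<rho>)\<bar> \<le> 2*\<eta>"
        by (rule unif[OF w d])
      have B: "\<bar>k (v + real j*\<rho>) - k v\<bar> \<le> \<eta>" using elim(1) jm by blast
      have A': "\<bar>k (v + s) - k (v + real j * \<rho>)\<bar> \<le> 2*\<eta>" using A by simp
      from A' B show "\<bar>k (v+s) - k v\<bar> \<le> \<epsilon>" unfolding \<eta>_def by linarith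
    qed
  qed
qed

lemma expneg_filterlim: "filterlim (\<lambda>v::real. exp (-v)) (at_right 0) at_top"
  by (rule tendsto_imp_filterlim_at_right[OF filterlim_compose[OF exp_at_bot filterlim_uminus_at_bot_at_top]]) auto

lemma rv0_pos: "RV0 f \<beta> \<Longrightarrow> x > 0 \<Longrightarrow> f x > 0" by (auto simp: RV0_def)

lemma rv0_k_lim:
  assumes rv: "RV0 f \<beta>"
  shows "((\<lambda>v. (ln (f (exp (-(max (v+s) 0)))) + \<beta> * max (v+s) 0) - (ln (f (exp (-(max v 0)))) + \<beta> * max v 0)) \<longlongrightarrow> 0) at_top"
proof -
  have r: "((\<lambda>x. f (exp (-s) * x) / f x) \<longlongrightarrow> exp (-s) powr \<beta>) (at_right 0)"
    using rv by (auto simp: RV0_def)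
  have r2: "((\<lambda>v. f (exp (-s) * exp (-v)) / f (exp (-v))) \<longlongrightarrow> exp (-s) powr \<beta>) at_top"
    by (rule filterlim_compose[OF r expneg_filterlim])
  have r3: "((\<lambda>v. ln (f (exp (-s) * exp (-v)) / f (exp (-v))) + \<beta> * s) \<longlongrightarrow> ln (exp (-s) powr \<beta>) + \<beta> * s) at_top"
    by (intro tendsto_intros r2) auto
  have l: "ln (exp (-s) powr \<beta>) + \<beta> * s = 0" by (simp add: ln_powr)
  have ev: "eventually (\<lambda>v. ln (f (exp (-s) * exp (-v)) / f (exp (-v))) + \<beta> * s =
     (ln (f (exp (-(max (v+s) 0)))) + \<beta> * max (v+s) 0) - (ln (f (exp (-(max v 0)))) + \<beta> * max v 0)) at_top"
    using eventually_ge_at_top[of "\<bar>s\<bar>"]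
  proof eventually_elim
    case (elim v)
    then have m: "max v 0 = v" "max (v+s) 0 = v + s" by auto
    have "exp (-s) * exp (-v) = exp (-(v+s))" by (simp add: exp_add[symmetric])
    moreover have "f (exp (-(v+s))) > 0" "f (exp (-v)) > 0" using rv0_pos[OF rv] by auto
    ultimately show ?case unfolding m by (simp add: ln_div algebra_simps)
  qed
  show ?thesis
    using tendsto_cong[OF ev] r3 l by simp
qed
lemma rv0_unif:
  assumes rv: "RV0 f \<beta>" and fcont: "continuous_on {0<..} f" and bpos: "\<beta> \<ge> 0" and epos: "\<epsilon> > 0"
  shows "\<exists>\<delta>>0. \<forall>u \<mu>. 0 < u \<longrightarrow> u \<le> \<delta> \<longrightarrow> 1/2 \<le> \<mu> \<longrightarrow> \<mu> \<le> 1 \<longrightarrow> f (\<mu> * u) \<le> (1+\<epsilon>) * f u"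
proof -
  define k where "k v = ln (f (exp (-(max v 0)))) + \<beta> * max v 0" for v
  have kc: "continuous_on UNIV k"
    unfolding k_def
    by (intro continuous_intros continuous_on_compose2[OF fcont]) (auto simp: rv0_pos[OF rv] dual_order.strict_implies_not_eq)
  have kl: "((\<lambda>v. k (v+s) - k v) \<longlongrightarrow> 0) at_top" for s
    unfolding k_def by (rule rv0_k_lim[OF rv])
  have "eventually (\<lambda>v. \<forall>s\<in>{0..1}. \<bar>k (v+s) - k v\<bar> \<le> ln (1+\<epsilon>)) at_top"
    by (rule uct_additive[OF kc kl]) (use epos in auto)
  then obtain N where N: "\<And>v s. v \<ge> N \<Longrightarrow> s \<in> {0..1} \<Longrightarrow> \<bar>k (v+s) - k v\<bar> \<le> ln (1+\<epsilon>)"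
    unfolding eventually_at_top_linorder by blast
  show ?thesis
  proof (intro exI[of _ "exp (-(max N 0))"] conjI allI impI)
    fix u \<mu> :: real
    assume u: "0 < u" "u \<le> exp (-(max N 0))" and m: "1/2 \<le> \<mu>" "\<mu> \<le> 1"
    define v where "v = - ln u"
    define s where "s = - ln \<mu>"
    have mpos: "\<mu> > 0" using m by auto
    have "ln u \<le> ln (exp (-(max N 0)))" using u by (subst ln_le_cancel_iff) auto
    then have vN: "v \<ge> max N 0" unfolding v_def by simp linarith
    have s0: "s \<ge> 0" using m mpos by (simp add: s_def)
    have "ln (1/2) \<le> ln \<mu>" using m by (subst ln_le_cancel_iff) auto
    then have s1: "s \<le> 1" using ln_2_less_1 by (simp add: s_def ln_div)
    have ue: "exp (-v) = u" using u by (simp add: v_def)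
    have me: "exp (-(v+s)) = \<mu> * u" using u mpos by (simp add: v_def s_def exp_add)
    have "\<bar>k (v+s) - k v\<bar> \<le> ln (1+\<epsilon>)" using N[of v s] vN s0 s1 by auto
    moreover have "k (v+s) - k v = ln (f (\<mu>*u)) - ln (f u) + \<beta> * s"
    proof -
      have m1: "max (v+s) 0 = v+s" and m2: "max v 0 = v" using vN s0 by auto
      have e1: "k (v+s) = ln (f (\<mu>*u)) + \<beta> * (v+s)" unfolding k_def m1 me by (rule refl)
      have e2: "k v = ln (f u) + \<beta> * v" unfolding k_def m2 ue by (rule refl)
      show ?thesis unfolding e1 e2 by (simp add: algebra_simps)
    qed
    ultimately have "ln (f (\<mu>*u)) \<le> ln (f u) + ln (1+\<epsilon>)"
      using mult_nonneg_nonneg[OF bpos s0] by linarith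
    also have "\<dots> = ln ((1+\<epsilon>) * f u)" using epos rv0_pos[OF rv u(1)] by (simp add: ln_mult)
    finally show "f (\<mu> * u) \<le> (1+\<epsilon>) * f u"
      using rv0_pos[OF rv, of "\<mu>*u"] rv0_pos[OF rv u(1)] u mpos epos
      by (subst (asm) ln_le_cancel_iff) auto
  qed (simp)
qed

lemma rv0_halving:
  assumes rv: "RV0 f \<beta>" and b1: "\<beta> > 1"
  shows "\<exists>q \<delta>. 0 < q \<and> q < 1/2 \<and> \<delta> > 0 \<and> (\<forall>w. 0 < w \<longrightarrow> w \<le> \<delta> \<longrightarrow> f (w/2) \<le> q * f w)"
proof -
  from rv have A: "\<forall>l>0. ((\<lambda>x. f (l * x) / f x) \<longlongrightarrow> l powr \<beta>) (at_right 0)" by (simp add: RV0_def)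
  have l: "((\<lambda>x. f (x/2) / f x) \<longlongrightarrow> (1/2) powr \<beta>) (at_right 0)"
    using A[rule_format, of "1/2"] by simp
  have p: "(1/2::real) powr \<beta> < (1/2) powr 1"
    using b1 by (intro powr_less_mono') auto
  define q where "q = ((1/2) powr \<beta> + 1/2) / 2"
  have pp: "(1/2::real) powr \<beta> > 0" by simp
  have q: "0 < q" "q < 1/2" "(1/2) powr \<beta> < q" unfolding q_def using p pp by (simp_all del: powr_gt_zero)
  have "eventually (\<lambda>x. f (x/2) / f x < q) (at_right 0)"
    using order_tendstoD(2)[OF l q(3)] .
  then obtain b where b: "b > 0" "\<And>y. 0 < y \<Longrightarrow> y < b \<Longrightarrow> f (y/2) / f y < q"
    by (auto simp: eventually_at_right_field)
  show ?thesis
  proof (rule exI[of _ q], rule exI[of _ "b/2"], intro conjI allI impI)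
    fix w :: real assume w: "0 < w" "w \<le> b/2"
    have "f (w/2) / f w < q" using b w by auto
    then show "f (w/2) \<le> q * f w" using rv0_pos[OF rv w(1)] by (simp add: divide_simps)
  qed (use q b in auto)
qed

lemma rv0_doubling:
  assumes rv: "RV0 f \<beta>"
  shows "\<exists>K \<delta>. \<delta> > 0 \<and> (\<forall>w. 0 < w \<longrightarrow> w \<le> \<delta> \<longrightarrow> f (2*w) \<le> K * f w)"
proof -
  have l: "((\<lambda>x. f (2 * x) / f x) \<longlongrightarrow> 2 powr \<beta>) (at_right 0)"
    using rv by (auto simp: RV0_def)
  have "eventually (\<lambda>x. f (2 * x) / f x < 2 powr \<beta> + 1) (at_right 0)"
    using order_tendstoD(2)[OF l] by auto
  then obtain b where b: "b > 0" "\<And>y. 0 < y \<Longrightarrow> y < b \<Longrightarrow> f (2 * y) / f y < 2 powr \<beta> + 1"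
    by (auto simp: eventually_at_right_field)
  show ?thesis
  proof (rule exI[of _ "2 powr \<beta> + 1"], rule exI[of _ "b/2"], intro conjI allI impI)
    fix w :: real assume w: "0 < w" "w \<le> b/2"
    have "f (2 * w) / f w < 2 powr \<beta> + 1" using b w by auto
    then show "f (2*w) \<le> (2 powr \<beta> + 1) * f w" using rv0_pos[OF rv w(1)] by (simp add: divide_simps)
  qed (use b in auto)
qed

lemma dyadic_exists:
  fixes z u :: real
  assumes "0 < z" "z \<le> u"
  shows "\<exists>n. u / 2^(Suc n) < z \<and> z \<le> u / 2^n"
proof -
  obtain N where N: "u/z < 2^N" using real_arch_pow[of 2 "u/z"] by auto
  define P where "P m = (u/z < (2::real)^m)" for m
  have "P N" using N by (simp add: P_def)
  then obtain m where m: "P m" "\<And>k. P k \<Longrightarrow> m \<le> k"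
    by (metis exists_least_iff not_le)
  have "m \<noteq> 0"
  proof
    assume "m = 0"
    then have "u/z < 1" using m(1) by (simp add: P_def)
    then show False using assms by (simp add: divide_less_eq)
  qed
  then obtain n where n: "m = Suc n" by (cases m) auto
  have "\<not> P n" using m(2)[of n] n by auto
  then have a: "2^n \<le> u/z" by (simp add: P_def)
  have b: "u/z < 2^Suc n" using m(1) n by (simp add: P_def)
  show ?thesis
  proof (intro exI[of _ n] conjI)
    show "u / 2^(Suc n) < z" using b assms by (simp add: field_simps del: power_Suc)
    show "z \<le> u / 2^n" using a assms by (simp add: field_simps)
  qed
qed

lemma halving_iter:
  fixes f :: "real \<Rightarrow> real"
  assumes h: "\<And>w. 0 < w \<Longrightarrow> w \<le> \<delta> \<Longrightarrow> f (w/2) \<le> q * f w" and q: "q \<ge> 0"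
  shows "0 < u \<Longrightarrow> u \<le> \<delta> \<Longrightarrow> f (u / 2^n) \<le> q^n * f u"
proof (induction n)
  case 0 then show ?case by simp
next
  case (Suc n)
  have "u / 2^n \<le> u" using Suc.prems by (simp add: divide_le_eq one_le_power)
  then have "u / 2^n \<le> \<delta>" using Suc.prems by linarith
  moreover have "u / 2^n > 0" using Suc.prems by simp
  ultimately have "f ((u / 2^n)/2) \<le> q * f (u/2^n)" using h by blast
  also have "\<dots> \<le> q * (q^n * f u)" using Suc q by (intro mult_left_mono) auto
  finally show ?case by (simp add: field_simps)
qed

lemma rv0_potter:
  assumes rv: "RV0 f \<beta>" and fcont: "continuous_on {0<..} f" and b1: "\<beta> > 1" and epos: "\<epsilon> > 0"
  shows "\<exists>q \<delta>. 0 < q \<and> q < 1/2 \<and> \<delta> > 0 \<and>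
     (\<forall>z u n. 0 < z \<longrightarrow> z \<le> u \<longrightarrow> u \<le> \<delta> \<longrightarrow> u / 2^(Suc n) < z \<longrightarrow> z \<le> u / 2^n \<longrightarrow> f z \<le> (1+\<epsilon>) * q^n * f u)"
proof -
  obtain q \<delta>1 where q: "0 < q" "q < 1/2" "\<delta>1 > 0" and h: "\<And>w. 0 < w \<Longrightarrow> w \<le> \<delta>1 \<Longrightarrow> f (w/2) \<le> q * f w"
    using rv0_halving[OF rv b1] by blast
  obtain \<delta>2 where d2: "\<delta>2 > 0" and un: "\<And>u \<mu>. 0 < u \<Longrightarrow> u \<le> \<delta>2 \<Longrightarrow> 1/2 \<le> \<mu> \<Longrightarrow> \<mu> \<le> 1 \<Longrightarrow> f (\<mu> * u) \<le> (1+\<epsilon>) * f u"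
    using rv0_unif[OF rv fcont _ epos] b1 by auto
  show ?thesis
  proof (rule exI[of _ q], rule exI[of _ "min \<delta>1 \<delta>2"], intro conjI allI impI)
    fix z u :: real and n :: nat
    assume z: "0 < z" "z \<le> u" "u \<le> min \<delta>1 \<delta>2" "u / 2^(Suc n) < z" "z \<le> u / 2^n"
    define w where "w = u / 2^n"
    have wpos: "w > 0" using z by (simp add: w_def)
    have wd: "w \<le> u" using z by (simp add: w_def divide_le_eq one_le_power)
    have mu: "1/2 \<le> z / w" "z / w \<le> 1" using z wpos by (auto simp: w_def field_simps)
    have "f z = f ((z/w) * w)" using wpos by simp
    also have "\<dots> \<le> (1+\<epsilon>) * f w" using un[OF wpos _ mu] wd z by auto
    also have "f w \<le> q^n * f u" unfolding w_def using halving_iter[of \<delta>1 f q u n] h q z by auto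
    then have "(1+\<epsilon>) * f w \<le> (1+\<epsilon>) * (q^n * f u)" using epos by (intro mult_left_mono) auto
    finally show "f z \<le> (1+\<epsilon>) * q^n * f u" by (simp add: mult.assoc)
  qed (use q d2 in auto)
qed

lemma rv0_nearmono:
  assumes rv: "RV0 f \<beta>" and fcont: "continuous_on {0<..} f" and b1: "\<beta> > 1" and epos: "\<epsilon> > 0"
  shows "\<exists>\<delta>>0. \<forall>z u. 0 < z \<longrightarrow> z \<le> u \<longrightarrow> u \<le> \<delta> \<longrightarrow> f z \<le> (1+\<epsilon>) * f u"
proof -
  obtain q \<delta> where q: "0 < q" "q < 1/2" "\<delta> > 0" and P: "\<And>z u n. 0 < z \<Longrightarrow> z \<le> u \<Longrightarrow> u \<le> \<delta> \<Longrightarrow> u / 2^(Suc n) < z \<Longrightarrow> z \<le> u / 2^n \<Longrightarrow> f z \<le> (1+\<epsilon>) * q^n * f u"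
    using rv0_potter[OF rv fcont b1 epos] by blast
  show ?thesis
  proof (intro exI[of _ \<delta>] conjI allI impI)
    fix z u :: real assume z: "0 < z" "z \<le> u" "u \<le> \<delta>"
    obtain n where n: "u / 2^(Suc n) < z" "z \<le> u / 2^n" using dyadic_exists[OF z(1,2)] by blast
    have "f z \<le> (1+\<epsilon>) * q^n * f u" using P[OF z n] .
    also have "\<dots> \<le> (1+\<epsilon>) * 1 * f u"
      using q epos rv0_pos[OF rv, of u] z by (intro mult_right_mono mult_left_mono power_le_one) auto
    finally show "f z \<le> (1+\<epsilon>) * f u" by simp
  qed (use q in auto)
qed



locale Fctx =
  fixes f :: "real \<Rightarrow> real"
  assumes fcont: "continuous_on {0<..} f"
    and fpos: "\<And>w. w > 0 \<Longrightarrow> f w > 0"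
begin

lemma invf_cont: "0 < a \<Longrightarrow> continuous_on {a..b} (\<lambda>u. 1 / f u)"
  by (intro continuous_intros continuous_on_subset[OF fcont]) (auto, smt (verit) fpos)

lemma invf_int: "0 < a \<Longrightarrow> (\<lambda>u. 1 / f u) integrable_on {a..b}"
  by (rule integrable_continuous_interval[OF invf_cont])

lemma F_le1: "x \<le> 1 \<Longrightarrow> Fint f x = integral {x..1} (\<lambda>u. 1 / f u)"
  by (simp add: Fint_def)

lemma F_diff: "0 < a \<Longrightarrow> a \<le> b \<Longrightarrow> b \<le> 1 \<Longrightarrow> Fint f a - Fint f b = integral {a..b} (\<lambda>u. 1 / f u)"
  using Henstock_Kurzweil_Integration.integral_combine[where a=a and c=b and b=1 and f="\<lambda>u. 1 / f u", OF _ _ invf_int] by (simp add: F_le1)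

lemma int_upper:
  assumes "0 < a" "a \<le> b" "\<And>u. a \<le> u \<Longrightarrow> u \<le> b \<Longrightarrow> 1 / f u \<le> hi"
  shows "integral {a..b} (\<lambda>u. 1 / f u) \<le> (b - a) * hi"
proof -
  have "integral {a..b} (\<lambda>u. 1 / f u) \<le> integral {a..b} (\<lambda>u. hi)"
    using assms by (intro integral_le invf_int) auto
  then show ?thesis using assms by simp
qed

lemma int_lower:
  assumes "0 < a" "a \<le> b" "\<And>u. a \<le> u \<Longrightarrow> u \<le> b \<Longrightarrow> lo \<le> 1 / f u"
  shows "(b - a) * lo \<le> integral {a..b} (\<lambda>u. 1 / f u)"
proof -
  have "integral {a..b} (\<lambda>u. lo) \<le> integral {a..b} (\<lambda>u. 1 / f u)"
    using assms by (intro integral_le invf_int) auto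
  then show ?thesis using assms by simp
qed

lemma F_nonneg: "0 < x \<Longrightarrow> x \<le> 1 \<Longrightarrow> Fint f x \<ge> 0"
  unfolding F_le1 by (rule integral_nonneg[OF invf_int]) (auto, smt (verit) fpos)

lemma F_1: "Fint f 1 = 0" by (simp add: Fint_def)

lemma F_gt1: "x > 1 \<Longrightarrow> Fint f x \<le> 0"
proof -
  assume x: "x > 1"
  have "integral {1..x} (\<lambda>u. 1 / f u) \<ge> 0"
    by (rule integral_nonneg[OF invf_int]) (auto, smt (verit) fpos)
  then show ?thesis using x by (simp add: Fint_def)
qed

lemma F_cont: "0 < a \<Longrightarrow> continuous_on {a..1} (Fint f)"
proof -
  assume a: "0 < a"
  have "continuous_on {a..1} (\<lambda>x. integral {x..1} (\<lambda>u. 1 / f u))"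
    by (rule indefinite_integral_continuous_1'[OF invf_int[OF a]])
  then show ?thesis by (rule continuous_on_cong[THEN iffD1, rotated 2]) (auto simp: F_le1)
qed

lemma F_deriv: "0 < u \<Longrightarrow> u < 1 \<Longrightarrow> (Fint f has_real_derivative - (1 / f u)) (at u)"
proof -
  assume u: "0 < u" "u < 1"
  have "((\<lambda>x. integral {x..1} (\<lambda>u. 1 / f u)) has_real_derivative - (1 / f u)) (at u within {u/2..1})"
    by (rule integral_has_real_derivative'[OF invf_cont]) (use u in auto)
  moreover have "u \<in> interior {u/2..1}" using u by auto
  ultimately have "((\<lambda>x. integral {x..1} (\<lambda>u. 1 / f u)) has_real_derivative - (1 / f u)) (at u)"
    by (metis at_within_interior)
  then show ?thesis
  proof (rule has_field_derivative_transform_within_open[where S = "{..<1}"])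
    show "open {..<(1::real)}" by simp
    show "u \<in> {..<1}" using u by simp
    fix x :: real assume "x \<in> {..<1}"
    then show "integral {x..1} (\<lambda>u. 1 / f u) = Fint f x" using F_le1[of x] by simp
  qed
qed

lemma F_strict: "0 < a \<Longrightarrow> a < b \<Longrightarrow> b \<le> 1 \<Longrightarrow> Fint f a > Fint f b"
proof -
  assume ab: "0 < a" "a < b" "b \<le> 1"
  show ?thesis
  proof (rule DERIV_neg_imp_decreasing_open[OF ab(2)])
    fix x assume "a < x" "x < b"
    then show "\<exists>y. (Fint f has_real_derivative y) (at x) \<and> y < 0"
      using F_deriv[of x] fpos[of x] ab by auto
  next
    show "continuous_on {a..b} (Fint f)" by (rule continuous_on_subset[OF F_cont[OF ab(1)]]) (use ab in auto)
  qed
qed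


lemma Finv_prop:
  assumes Flim: "filterlim (Fint f) at_top (at_right 0)" and t: "t > 0"
  shows "0 < Finv f t \<and> Finv f t \<le> 1 \<and> Fint f (Finv f t) = t"
proof -
  have "eventually (\<lambda>x. t < Fint f x) (at_right 0)"
    using Flim by (simp add: filterlim_at_top_dense)
  then obtain b where b: "b > 0" "\<And>y. 0 < y \<Longrightarrow> y < b \<Longrightarrow> t < Fint f y"
    by (auto simp: eventually_at_right_field)
  define a where "a = min (b/2) (1/2)"
  have a: "0 < a" "a < b" "a \<le> 1" using b by (auto simp: a_def)
  have Fa: "t < Fint f a" using b a by auto
  obtain y where y: "a \<le> y" "y \<le> 1" "Fint f y = t"
    using IVT2'[of "Fint f" 1 t a, OF _ _ a(3) F_cont[OF a(1)]] Fa t F_1 by auto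
  have ypos: "y > 0" using a y by auto
  have uniq: "y' = y" if y': "y' > 0 \<and> Fint f y' = t" for y'
  proof -
    have "y' \<le> 1" using F_gt1[of y'] y' t by force
    show ?thesis
    proof (rule ccontr)
      assume "y' \<noteq> y"
      then consider "y' < y" | "y < y'" by linarith
      then show False
      proof cases
        case 1 then show False using F_strict[of y' y] y y' by auto
      next
        case 2 then show False using F_strict[of y y'] \<open>y' \<le> 1\<close> ypos y y' by auto
      qed
    qed
  qed
  have "Finv f t = y"
    unfolding Finv_def
  proof (rule the_equality)
    show "y > 0 \<and> Fint f y = t" using ypos y by simp
    fix y' assume "y' > 0 \<and> Fint f y' = t" then show "y' = y" by (rule uniq)
  qed
  then show ?thesis using ypos y by auto
qed

lemma Finv_small:
  assumes Flim: "filterlim (Fint f) at_top (at_right 0)" and d: "0 < \<delta>" "\<delta> \<le> 1"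
  shows "eventually (\<lambda>t. Finv f t \<le> \<delta>) at_top"
  using eventually_gt_at_top[of "max 0 (Fint f \<delta>)"]
proof eventually_elim
  case (elim t)
  then have t: "t > 0" "t > Fint f \<delta>" by auto
  have P: "0 < Finv f t" "Finv f t \<le> 1" "Fint f (Finv f t) = t" using Finv_prop[OF Flim t(1)] by auto
  show ?case
  proof (rule ccontr)
    assume "\<not> Finv f t \<le> \<delta>"
    then have "Fint f (Finv f t) < Fint f \<delta>" using F_strict[of \<delta> "Finv f t"] d P by auto
    then show False using P t by auto
  qed
qed


lemma F_upper:
  assumes rv: "RV0 f \<beta>" and b1: "\<beta> > 1"
  shows "\<exists>\<delta> C. 0 < \<delta> \<and> \<delta> \<le> 1 \<and> C > 0 \<and> (\<forall>w. 0 < w \<longrightarrow> w \<le> \<delta> \<longrightarrow> Fint f w \<le> Fint f \<delta> + C * w / f w)"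
proof -
  obtain \<delta>1 where d1: "\<delta>1 > 0" and nm: "\<And>z u. 0 < z \<Longrightarrow> z \<le> u \<Longrightarrow> u \<le> \<delta>1 \<Longrightarrow> f z \<le> (1+1) * f u"
    using rv0_nearmono[OF rv fcont b1, of 1] by auto
  obtain q \<delta>2 where q: "0 < q" "q < 1/2" "\<delta>2 > 0" and h: "\<And>w. 0 < w \<Longrightarrow> w \<le> \<delta>2 \<Longrightarrow> f (w/2) \<le> q * f w"
    using rv0_halving[OF rv b1] by blast
  define \<delta> where "\<delta> = min (min \<delta>1 \<delta>2) 1"
  define C where "C = 2 / (1 - 2*q)"
  have d: "0 < \<delta>" "\<delta> \<le> 1" "\<delta> \<le> \<delta>1" "\<delta> \<le> \<delta>2" using d1 q by (auto simp: \<delta>_def)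
  have C: "C \<ge> 2" "C * (1 - 2*q) = 2" using q by (auto simp: C_def field_simps)
  have P: "\<forall>w. \<delta> / 2^(Suc n) \<le> w \<longrightarrow> w \<le> \<delta> \<longrightarrow> Fint f w \<le> Fint f \<delta> + C * w / f w" for n
  proof (induction n)
    case 0
    show ?case
    proof (intro allI impI)
      fix w assume w: "\<delta> / 2^(Suc 0) \<le> w" "w \<le> \<delta>"
      have wpos: "w > 0" using w d by auto
      have fw: "f w > 0" using fpos wpos by auto
      have "Fint f w - Fint f \<delta> = integral {w..\<delta>} (\<lambda>u. 1 / f u)" using F_diff[OF wpos w(2) d(2)] .
      also have "\<dots> \<le> (\<delta> - w) * (2 / f w)"
      proof (rule int_upper[OF wpos w(2)])
        fix u assume u: "w \<le> u" "u \<le> \<delta>"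
        have "f w \<le> 2 * f u" using nm[of w u] wpos u d by auto
        then show "1 / f u \<le> 2 / f w" using fw fpos[of u] u wpos by (simp add: field_simps)
      qed
      also have "\<dots> \<le> w * (2 / f w)" using w fw by (intro mult_right_mono) auto
      also have "\<dots> \<le> C * w / f w" using C(1) wpos fw by (simp add: field_simps)
      finally show "Fint f w \<le> Fint f \<delta> + C * w / f w" by simp
    qed
  next
    case (Suc n)
    show ?case
    proof (intro allI impI)
      fix w assume w: "\<delta> / 2^(Suc (Suc n)) \<le> w" "w \<le> \<delta>"
      show "Fint f w \<le> Fint f \<delta> + C * w / f w"
      proof (cases "\<delta> / 2^(Suc n) \<le> w")
        case True then show ?thesis using Suc.IH w by blast
      next
        case False
        have wpos: "w > 0" using w d by (smt (verit) divide_pos_pos zero_less_power)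
        have fw: "f w > 0" using fpos wpos by auto
        have w2a: "\<delta> / 2^(Suc n) \<le> 2*w" using w by (simp add: field_simps)
        have "\<delta> / 2^(Suc n) \<le> \<delta> / 2" using d by (simp add: field_simps)
        then have w2b: "2*w \<le> \<delta>" using False by linarith
        have f2w: "f (2*w) > 0" using fpos wpos by auto
        have IH: "Fint f (2*w) \<le> Fint f \<delta> + C * (2*w) / f (2*w)" using Suc.IH w2a w2b by blast
        have "Fint f w - Fint f (2*w) = integral {w..2*w} (\<lambda>u. 1 / f u)" using F_diff[of w "2*w"] wpos w2b d by auto
        also have "\<dots> \<le> (2*w - w) * (2 / f w)"
        proof (rule int_upper)
          fix u assume u: "w \<le> u" "u \<le> 2*w"
          have "f w \<le> 2 * f u" using nm[of w u] wpos u d w2b by auto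
          then show "1 / f u \<le> 2 / f w" using fw fpos[of u] u wpos by (simp add: field_simps)
        qed (use wpos in auto)
        finally have A: "Fint f w \<le> Fint f (2*w) + 2 * w / f w" by (simp add: mult.commute)
        have "f w \<le> q * f (2*w)" using h[of "2*w"] wpos w2b d by auto
        then have "1 / f (2*w) \<le> q / f w" using fw f2w q by (simp add: field_simps)
        then have B: "C * (2*w) / f (2*w) \<le> C * (2*w) * (q / f w)"
          using C wpos by (metis mult_left_mono times_divide_eq_right mult_nonneg_nonneg less_imp_le zero_le_numeral order_trans[OF _ C(1)] mult_1_right)
        have E1: "C * (2*w) * (q / f w) + 2 * w / f w = (C * (2*q) + 2) * w / f w" by (simp add: add_divide_distrib algebra_simps)
        have E2: "C * (2*q) + 2 = C" using C(2) by (simp add: algebra_simps)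
        show ?thesis using A IH B E1 E2 by simp
      qed
    qed
  qed
  show ?thesis
  proof (rule exI[of _ \<delta>], rule exI[of _ C], intro conjI allI impI)
    fix w assume w: "0 < w" "w \<le> \<delta>"
    obtain n where "\<delta> / 2^(Suc n) < w" using dyadic_exists[OF w] by blast
    then show "Fint f w \<le> Fint f \<delta> + C * w / f w" using P[of n] w by auto
  qed (use d C in auto)
qed

lemma F_lower:
  assumes rv: "RV0 f \<beta>" and b1: "\<beta> > 1"
  shows "\<exists>\<delta> K. 0 < \<delta> \<and> K > 0 \<and> (\<forall>z. 0 < z \<longrightarrow> z \<le> \<delta> \<longrightarrow> z / (K * f z) \<le> Fint f z)"
proof -
  obtain \<delta>1 where d1: "\<delta>1 > 0" and nm: "\<And>z u. 0 < z \<Longrightarrow> z \<le> u \<Longrightarrow> u \<le> \<delta>1 \<Longrightarrow> f z \<le> (1+1) * f u"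
    using rv0_nearmono[OF rv fcont b1, of 1] by auto
  obtain K0 \<delta>K where dK: "\<delta>K > 0" and dbl: "\<And>w. 0 < w \<Longrightarrow> w \<le> \<delta>K \<Longrightarrow> f (2*w) \<le> K0 * f w"
    using rv0_doubling[OF rv] by blast
  have K0: "K0 > 0"
  proof -
    have "0 < f (2*\<delta>K)" using fpos dK by auto
    also have "\<dots> \<le> K0 * f \<delta>K" using dbl dK by auto
    finally show ?thesis using fpos[OF dK] by (simp add: zero_less_mult_iff)
  qed
  define \<delta> where "\<delta> = min (min \<delta>1 1 / 2) \<delta>K"
  have d: "0 < \<delta>" "2*\<delta> \<le> \<delta>1" "2*\<delta> \<le> 1" "\<delta> \<le> \<delta>K" using d1 dK by (auto simp: \<delta>_def)
  show ?thesis
  proof (rule exI[of _ \<delta>], rule exI[of _ "2*K0"], intro conjI allI impI)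
    fix z assume z: "0 < z" "z \<le> \<delta>"
    have fz: "f z > 0" "f (2*z) > 0" using fpos z by auto
    have "z * (1 / (2 * f (2*z))) \<le> integral {z..2*z} (\<lambda>u. 1 / f u)"
    proof -
      have "(2*z - z) * (1 / (2 * f (2*z))) \<le> integral {z..2*z} (\<lambda>u. 1 / f u)"
      proof (rule int_lower)
        fix u assume u: "z \<le> u" "u \<le> 2*z"
        have "f u \<le> 2 * f (2*z)" using nm[of u "2*z"] z u d by auto
        then show "1 / (2 * f (2*z)) \<le> 1 / f u" using fz fpos[of u] u z by (simp add: field_simps)
      qed (use z in auto)
      then show ?thesis by simp
    qed
    also have "\<dots> = Fint f z - Fint f (2*z)" using F_diff[of z "2*z"] z d by auto
    also have "\<dots> \<le> Fint f z" using F_nonneg[of "2*z"] z d by auto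
    finally have A: "z * (1 / (2 * f (2*z))) \<le> Fint f z" .
    have "f (2*z) \<le> K0 * f z" using dbl z d by auto
    then have "z / (2*K0 * f z) \<le> z * (1 / (2 * f (2*z)))" using fz K0 z by (simp add: field_simps)
    with A show "z / (2*K0 * f z) \<le> Fint f z" by linarith
  qed (use d K0 in auto)
qed


lemma F_compare:
  assumes rv: "RV0 f \<beta>" and b1: "\<beta> > 1"
  shows "\<exists>c0. \<forall>\<eta>>0. \<exists>M \<delta>. M > 0 \<and> \<delta> > 0 \<and>
     (\<forall>z u. 0 < z \<longrightarrow> z \<le> \<delta> \<longrightarrow> 0 < u \<longrightarrow> u \<le> \<delta> \<longrightarrow> M * f z \<le> f u \<longrightarrow> Fint f u \<le> c0 + \<eta> * Fint f z)"
proof -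
  obtain \<delta>5 C where d5: "0 < \<delta>5" "\<delta>5 \<le> 1" "C > 0" and up: "\<And>w. 0 < w \<Longrightarrow> w \<le> \<delta>5 \<Longrightarrow> Fint f w \<le> Fint f \<delta>5 + C * w / f w"
    using F_upper[OF rv b1] by blast
  obtain \<delta>6 K where d6: "0 < \<delta>6" "K > 0" and lo: "\<And>z. 0 < z \<Longrightarrow> z \<le> \<delta>6 \<Longrightarrow> z / (K * f z) \<le> Fint f z"
    using F_lower[OF rv b1] by blast
  obtain \<delta>1 where d1: "\<delta>1 > 0" and nm: "\<And>z u. 0 < z \<Longrightarrow> z \<le> u \<Longrightarrow> u \<le> \<delta>1 \<Longrightarrow> f z \<le> (1+1) * f u"
    using rv0_nearmono[OF rv fcont b1, of 1] by auto
  obtain q \<delta>p where q: "0 < q" "q < 1/2" "\<delta>p > 0" and pot: "\<And>z u n. 0 < z \<Longrightarrow> z \<le> u \<Longrightarrow> u \<le> \<delta>p \<Longrightarrow> u / 2^(Suc n) < z \<Longrightarrow> z \<le> u / 2^n \<Longrightarrow> f z \<le> (1+1) * q^n * f u"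
    using rv0_potter[OF rv fcont b1, of 1] by auto
  show ?thesis
  proof (rule exI[of _ "Fint f \<delta>5"], intro allI impI)
    fix \<eta> :: real assume eta: "\<eta> > 0"
    define \<eta>' where "\<eta>' = \<eta> / (C * K)"
    have eta': "\<eta>' > 0" using eta d5 d6 by (simp add: \<eta>'_def)
    obtain n0 where n0: "(2*q)^n0 < \<eta>'/4" using real_arch_pow_inv[of "\<eta>'/4" "2*q"] eta' q by auto
    define M where "M = max 3 (2^n0 / \<eta>')"
    define \<delta> where "\<delta> = min (min \<delta>5 \<delta>6) (min \<delta>1 \<delta>p)"
    have M: "M \<ge> 3" "M \<ge> 2^n0 / \<eta>'" by (auto simp: M_def)
    have d: "0 < \<delta>" "\<delta> \<le> \<delta>5" "\<delta> \<le> \<delta>6" "\<delta> \<le> \<delta>1" "\<delta> \<le> \<delta>p" using d5 d6 d1 q by (auto simp: \<delta>_def)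
    show "\<exists>M \<delta>. M > 0 \<and> \<delta> > 0 \<and>
     (\<forall>z u. 0 < z \<longrightarrow> z \<le> \<delta> \<longrightarrow> 0 < u \<longrightarrow> u \<le> \<delta> \<longrightarrow> M * f z \<le> f u \<longrightarrow> Fint f u \<le> Fint f \<delta>5 + \<eta> * Fint f z)"
    proof (rule exI[of _ M], rule exI[of _ \<delta>], intro conjI allI impI)
      fix z u assume zu: "0 < z" "z \<le> \<delta>" "0 < u" "u \<le> \<delta>" "M * f z \<le> f u"
      have fz: "f z > 0" and fu: "f u > 0" using fpos zu by auto
      have zle: "z \<le> u"
      proof (rule ccontr)
        assume "\<not> z \<le> u"
        then have "f u \<le> 2 * f z" using nm[of u z] zu d by auto
        moreover have "3 * f z \<le> M * f z" using M fz by (intro mult_right_mono) auto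
        ultimately show False using zu fz by linarith
      qed
      obtain n where n: "u / 2^(Suc n) < z" "z \<le> u / 2^n" using dyadic_exists[OF zu(1) zle] by blast
      have uz: "u / z < 2^(Suc n)" using n(1) zu by (simp add: field_simps del: power_Suc)
      define R where "R = (u / z) * (f z / f u)"
      have R: "R \<le> \<eta>'"
      proof (cases "n0 \<le> n")
        case True
        have "f z \<le> 2 * q^n * f u" using pot[OF zu(1) zle _ n] zu d by auto
        then have r1: "f z / f u \<le> 2 * q^n" using fu by (simp add: field_simps)
        have "R \<le> 2^(Suc n) * (2 * q^n)"
          unfolding R_def using uz r1 fz fu zu by (intro mult_mono) auto
        also have "\<dots> = 4 * (2*q)^n" by (simp add: power_mult_distrib)
        also have "(2*q)^n \<le> (2*q)^n0" using True q by (intro power_decreasing) auto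
        then have "4 * (2*q)^n \<le> 4 * (2*q)^n0" by simp
        finally show ?thesis using n0 by linarith
      next
        case False
        have r1: "f z / f u \<le> 1 / M" using zu fz fu M by (simp add: field_simps)
        have "R \<le> 2^(Suc n) * (1 / M)"
          unfolding R_def using uz r1 fz fu zu M by (intro mult_mono) auto
        also have "(2::real)^(Suc n) \<le> 2^n0" using False by (intro power_increasing) auto
        then have "(2::real)^(Suc n) * (1 / M) \<le> 2^n0 * (1/M)" using M by (intro mult_right_mono) auto
        also have "2^n0 * (1/M) \<le> \<eta>'" using M eta' by (simp add: field_simps)
        finally show ?thesis .
      qed
      have "Fint f u \<le> Fint f \<delta>5 + C * u / f u" using up zu d by auto
      also have "C * u / f u = C * R * (z / f z)" using fz fu zu by (simp add: R_def field_simps)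
      also have "C * R * (z / f z) \<le> C * \<eta>' * (z / f z)" using R d5 zu fz by (intro mult_right_mono mult_left_mono) auto
      also have "C * \<eta>' * (z / f z) = \<eta> * (z / (K * f z))" using d5 d6 fz by (simp add: \<eta>'_def field_simps)
      also have "\<dots> \<le> \<eta> * Fint f z" using lo[of z] zu d eta by (intro mult_left_mono) auto
      finally show "Fint f u \<le> Fint f \<delta>5 + \<eta> * Fint f z" by simp
    qed (use M d in auto)
  qed
qed

end


lemma mvt_bound:
  fixes \<Phi> \<Phi>' :: "real \<Rightarrow> real"
  assumes ab: "a \<le> b" and der: "\<And>s. a \<le> s \<Longrightarrow> s \<le> b \<Longrightarrow> (\<Phi> has_real_derivative \<Phi>' s) (at s)"
    and lb: "\<And>s. a < s \<Longrightarrow> s < b \<Longrightarrow> \<Phi>' s \<ge> c"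
  shows "\<Phi> b - \<Phi> a \<ge> c * (b - a)"
proof (cases "a = b")
  case True then show ?thesis by simp
next
  case False
  then have ab': "a < b" using ab by simp
  have cont: "continuous_on {a..b} \<Phi>"
    using der by (intro continuous_at_imp_continuous_on) (meson DERIV_isCont atLeastAtMost_iff)
  have "\<And>s. a < s \<Longrightarrow> s < b \<Longrightarrow> \<Phi> differentiable (at s)"
    using der by (meson less_imp_le real_differentiable_def)
  then obtain l z where lz: "a < z" "z < b" "(\<Phi> has_real_derivative l) (at z)" "\<Phi> b - \<Phi> a = (b - a) * l"
    using MVT[OF ab' cont] by blast
  have "l = \<Phi>' z" using DERIV_unique[OF lz(3) der[of z]] lz by auto
  then have "l \<ge> c" using lb lz by auto
  then show ?thesis using lz ab' by (simp add: mult.commute mult_right_mono)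
qed

locale Dyn = Fctx f for f +
  fixes g x :: "real \<Rightarrow> real" and \<beta> :: real
  assumes rv: "RV0 f \<beta>" and b1: "\<beta> > 1"
    and Flim: "filterlim (Fint f) at_top (at_right 0)"
    and gcont: "continuous_on {0<..} g" and gpos: "\<And>t. t > 0 \<Longrightarrow> g t > 0"
    and xpos: "\<And>t. t > 0 \<Longrightarrow> x t > 0"
    and xder: "\<And>t. t > 0 \<Longrightarrow> (x has_real_derivative (- f (x t) + g t)) (at t)"
    and xlim: "(x \<longlongrightarrow> 0) at_top"
    and gbig: "filterlim (\<lambda>t. g t / f (Finv f t)) at_top at_top"
begin

definition r where "r t = f (x t) / g t"

lemma r_cont: "0 < a \<Longrightarrow> continuous_on {a..b} r"
proof -
  assume a: "0 < a"
  have xc: "continuous_on {a..b} x"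
    using xder a by (intro continuous_at_imp_continuous_on) (meson DERIV_isCont atLeastAtMost_iff less_le_trans)
  have "continuous_on {a..b} (\<lambda>t. f (x t))"
    by (rule continuous_on_compose2[OF fcont xc]) (use a xpos in auto)
  moreover have "continuous_on {a..b} g" by (rule continuous_on_subset[OF gcont]) (use a in auto)
  ultimately show ?thesis unfolding r_def
    by (intro continuous_intros) (use a gpos in \<open>auto simp: dual_order.strict_implies_not_eq\<close>)
qed

lemma Phi_der:
  assumes "t > 0" "x t < 1"
  shows "((\<lambda>s. Fint f (x s)) has_real_derivative (1 - 1 / r t)) (at t)"
proof -
  have d: "((\<lambda>s. Fint f (x s)) has_real_derivative (- (1 / f (x t))) * (- f (x t) + g t)) (at t)"
    by (rule DERIV_chain2[OF F_deriv xder]) (use assms xpos in auto)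
  have "(- (1 / f (x t))) * (- f (x t) + g t) = 1 - 1 / r t"
    using fpos[OF xpos[OF assms(1)]] gpos[OF assms(1)] by (simp add: r_def field_simps)
  then show ?thesis using d by simp
qed

lemma closed_sub: "0 < a \<Longrightarrow> closed {s\<in>{a..b}. r s \<le> c}" "0 < a \<Longrightarrow> closed {s\<in>{a..b}. r s \<ge> c}"
proof -
  assume a: "0 < a"
  have "closed ({a..b} \<inter> r -` {..c})" by (rule continuous_closed_preimage[OF r_cont[OF a]]) auto
  moreover have "{s\<in>{a..b}. r s \<le> c} = {a..b} \<inter> r -` {..c}" by auto
  ultimately show "closed {s\<in>{a..b}. r s \<le> c}" by simp
  have "closed ({a..b} \<inter> r -` {c..})" by (rule continuous_closed_preimage[OF r_cont[OF a]]) auto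
  moreover have "{s\<in>{a..b}. r s \<ge> c} = {a..b} \<inter> r -` {c..}" by auto
  ultimately show "closed {s\<in>{a..b}. r s \<ge> c}" by simp
qed


lemma phi_bound: "r s \<ge> 1 + \<epsilon> \<Longrightarrow> \<epsilon> > 0 \<Longrightarrow> 1 - 1 / r s \<ge> \<epsilon> / (1+\<epsilon>)"
proof -
  assume a: "r s \<ge> 1 + \<epsilon>" "\<epsilon> > 0"
  have "1 / r s \<le> 1 / (1+\<epsilon>)" using a by (intro divide_left_mono) auto
  moreover have "1 - 1 / (1+\<epsilon>) = \<epsilon> / (1+\<epsilon>)" using a by (simp add: field_simps)
  ultimately show ?thesis by linarith
qed

lemma xsmall: "\<delta> > 0 \<Longrightarrow> \<exists>T. \<forall>s\<ge>T. x s \<le> \<delta>"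
proof -
  assume "\<delta> > 0"
  then have "eventually (\<lambda>s. x s < \<delta>) at_top" using order_tendstoD(2)[OF xlim] by auto
  then obtain T where "\<And>s. s \<ge> T \<Longrightarrow> x s < \<delta>" by (auto simp: eventually_at_top_linorder)
  then show ?thesis by (auto intro: less_imp_le)
qed

lemma upper_bound:
  assumes G2: "\<And>\<epsilon>. \<epsilon> > 0 \<Longrightarrow> \<exists>\<delta>>0. \<exists>T. \<forall>S t. T \<le> t \<longrightarrow> (1-\<delta>)*t \<le> S \<longrightarrow> S \<le> t \<longrightarrow> g S \<le> (1+\<epsilon>) * g t"
    and eps: "\<epsilon> > 0"
  shows "eventually (\<lambda>t. r t \<le> (1+\<epsilon>)^3) at_top"
proof -
  obtain \<delta>1 where d1: "\<delta>1 > 0" and nm: "\<And>z u. 0 < z \<Longrightarrow> z \<le> u \<Longrightarrow> u \<le> \<delta>1 \<Longrightarrow> f z \<le> (1+\<epsilon>) * f u"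
    using rv0_nearmono[OF rv fcont b1 eps] by auto
  obtain \<delta>2' T2 where d2': "\<delta>2' > 0" and g2: "\<And>S t. T2 \<le> t \<Longrightarrow> (1-\<delta>2')*t \<le> S \<Longrightarrow> S \<le> t \<Longrightarrow> g S \<le> (1+\<epsilon>) * g t"
    using G2[OF eps] by blast
  define \<delta>2 where "\<delta>2 = min \<delta>2' (1/2)"
  have d2: "\<delta>2 > 0" "\<delta>2 \<le> 1/2" "\<delta>2 \<le> \<delta>2'" using d2' by (auto simp: \<delta>2_def)
  define c where "c = \<epsilon> / (1+\<epsilon>)"
  have c: "c > 0" using eps by (simp add: c_def)
  obtain c0 where FC: "\<And>\<eta>. \<eta> > 0 \<Longrightarrow> \<exists>M \<delta>. M > 0 \<and> \<delta> > 0 \<and>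
     (\<forall>z u. 0 < z \<longrightarrow> z \<le> \<delta> \<longrightarrow> 0 < u \<longrightarrow> u \<le> \<delta> \<longrightarrow> M * f z \<le> f u \<longrightarrow> Fint f u \<le> c0 + \<eta> * Fint f z)"
    using F_compare[OF rv b1] by blast
  define \<eta> where "\<eta> = c * \<delta>2 / 2"
  have eta: "\<eta> > 0" using c d2 by (simp add: \<eta>_def)
  obtain M \<delta>L where Mdl: "M > 0" "\<delta>L > 0" and FC2: "\<And>z u. 0 < z \<Longrightarrow> z \<le> \<delta>L \<Longrightarrow> 0 < u \<Longrightarrow> u \<le> \<delta>L \<Longrightarrow> M * f z \<le> f u \<Longrightarrow> Fint f u \<le> c0 + \<eta> * Fint f z"
    using FC[OF eta] by blast
  obtain Tx where Tx: "\<And>s. s \<ge> Tx \<Longrightarrow> x s \<le> min (min \<delta>1 \<delta>L) (1/2)"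
    using xsmall[of "min (min \<delta>1 \<delta>L) (1/2)"] d1 Mdl by auto
  obtain Tz where Tz: "\<And>t. t \<ge> Tz \<Longrightarrow> Finv f t \<le> min \<delta>L 1"
    using Finv_small[OF Flim, of "min \<delta>L 1"] Mdl by (auto simp: eventually_at_top_linorder)
  have "eventually (\<lambda>t. M \<le> g t / f (Finv f t)) at_top" using gbig by (simp add: filterlim_at_top)
  then obtain Tg where Tg: "\<And>t. t \<ge> Tg \<Longrightarrow> M \<le> g t / f (Finv f t)" by (auto simp: eventually_at_top_linorder)
  define T0 where "T0 = max (max (max Tx Tz) (max Tg T2)) (max 1 (\<bar>c0\<bar> / \<eta>))"
  have T0: "T0 \<ge> Tx" "T0 \<ge> Tz" "T0 \<ge> Tg" "T0 \<ge> T2" "T0 \<ge> 1" "T0 \<ge> \<bar>c0\<bar> / \<eta>" by (auto simp: T0_def)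
  have xs: "0 < x s" "x s \<le> \<delta>1" "x s \<le> \<delta>L" "x s \<le> 1/2" if "s \<ge> T0" for s
    using Tx[of s] xpos[of s] that T0 by auto
  have Lphase: "Fint f (x t) \<le> c * \<delta>2 * t" if t: "t \<ge> T0" "f (x t) \<ge> g t" for t
  proof -
    have tpos: "t > 0" using t T0 by auto
    have Z: "0 < Finv f t" "Finv f t \<le> 1" "Fint f (Finv f t) = t" using Finv_prop[OF Flim tpos] by auto
    have Z2: "Finv f t \<le> \<delta>L" using Tz[of t] t T0 by auto
    have fz: "f (Finv f t) > 0" using fpos Z by auto
    have "M * f (Finv f t) \<le> g t" using Tg[of t] t T0 fz by (simp add: field_simps)
    then have "M * f (Finv f t) \<le> f (x t)" using t by linarith
    then have "Fint f (x t) \<le> c0 + \<eta> * t" using FC2[OF Z(1) Z2 xs(1,3)[OF t(1)]] Z by simp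
    moreover have "c0 \<le> \<eta> * t"
    proof -
      have "\<bar>c0\<bar> / \<eta> \<le> t" using T0 t by linarith
      then have "\<bar>c0\<bar> \<le> \<eta> * t" using eta by (simp add: field_simps)
      then show ?thesis by linarith
    qed
    moreover have "c * \<delta>2 / 2 * t + c * \<delta>2 / 2 * t = c * \<delta>2 * t" by (simp add: field_simps)
    ultimately show ?thesis unfolding \<eta>_def by linarith
  qed
  have der: "((\<lambda>s. Fint f (x s)) has_real_derivative (1 - 1 / r s)) (at s)" if "s \<ge> T0" for s
    using Phi_der[of s] xs[OF that] that T0 by auto
  show ?thesis
    using eventually_gt_at_top[of "2 * T0"]
  proof eventually_elim
    case (elim t)
    have tT0: "t \<ge> T0" "T0 < t" using elim T0 by auto
    show ?case
    proof (rule ccontr)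
      assume "\<not> r t \<le> (1+\<epsilon>)^3"
      then have rt: "r t > (1+\<epsilon>)^3" by simp
      have e3: "(1+\<epsilon>)^3 \<ge> 1" using eps by simp
      have gt: "g t > 0" using gpos tT0 T0 by auto
      have fxt: "f (x t) > (1+\<epsilon>)^3 * g t" using rt gt by (simp add: r_def field_simps)
      have "1 * g t \<le> (1+\<epsilon>)^3 * g t" by (rule mult_right_mono[OF e3]) (use gt in simp)
      then have fxt1: "f (x t) \<ge> g t" using fxt by linarith
      have LP: "Fint f (x t) \<le> c * \<delta>2 * t" using Lphase[OF tT0(1) fxt1] .
      define A where "A = {s\<in>{T0..t}. r s \<le> 1 + \<epsilon>}"
      show False
      proof (cases "A = {}")
        case True
        then have rA: "r s > 1 + \<epsilon>" if "T0 \<le> s" "s \<le> t" for s using that by (auto simp: A_def)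
        have "Fint f (x t) - Fint f (x T0) \<ge> c * (t - T0)"
        proof (rule mvt_bound[where \<Phi>' = "\<lambda>s. 1 - 1 / r s"])
          show "T0 \<le> t" using tT0 by simp
          show "\<And>s. T0 \<le> s \<Longrightarrow> s \<le> t \<Longrightarrow> ((\<lambda>s. Fint f (x s)) has_real_derivative 1 - 1 / r s) (at s)" using der by auto
          show "\<And>s. T0 < s \<Longrightarrow> s < t \<Longrightarrow> c \<le> 1 - 1 / r s" unfolding c_def using phi_bound rA eps by (simp add: less_imp_le)
        qed
        moreover have "Fint f (x T0) \<ge> 0" using F_nonneg xs[of T0] by auto
        moreover have "c * \<delta>2 * t \<le> c * t / 2"
        proof -
          have "c * \<delta>2 * t \<le> c * (1/2) * t" using c d2 tT0 T0 by (intro mult_right_mono mult_left_mono) auto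
          then show ?thesis by simp
        qed
        ultimately have "c * (t - T0) \<le> c * t / 2" using LP by linarith
        then have "t - T0 \<le> t / 2" using c by (simp add: field_simps)
        then show False using elim by linarith
      next
        case False
        have clo: "closed A" unfolding A_def by (rule closed_sub) (use T0 in auto)
        have bdd: "bdd_above A" unfolding A_def by (auto intro: bdd_aboveI[of _ t])
        define S where "S = Sup A"
        have SA: "S \<in> A" unfolding S_def by (rule closed_contains_Sup[OF False bdd clo])
        then have S: "T0 \<le> S" "S \<le> t" "r S \<le> 1 + \<epsilon>" by (auto simp: A_def)
        have after: "r s > 1 + \<epsilon>" if "S < s" "s \<le> t" for s
        proof (rule ccontr)
          assume "\<not> r s > 1 + \<epsilon>"
          then have "s \<in> A" using that S by (auto simp: A_def)
          then have "s \<le> S" unfolding S_def using bdd by (rule cSup_upper)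
          then show False using that by simp
        qed
        have phase: "Fint f (x t) - Fint f (x S) \<ge> c * (t - S)"
        proof (rule mvt_bound[where \<Phi>' = "\<lambda>s. 1 - 1 / r s"])
          show "S \<le> t" using S by simp
          show "\<And>s. S \<le> s \<Longrightarrow> s \<le> t \<Longrightarrow> ((\<lambda>s. Fint f (x s)) has_real_derivative 1 - 1 / r s) (at s)" using der S by auto
          show "\<And>s. S < s \<Longrightarrow> s < t \<Longrightarrow> c \<le> 1 - 1 / r s" unfolding c_def using phi_bound after eps by (simp add: less_imp_le)
        qed
        have "Fint f (x S) \<ge> 0" using F_nonneg xs[of S] S by auto
        then have "c * (t - S) \<le> c * (\<delta>2 * t)" using phase LP by (simp add: algebra_simps)
        then have "t - S \<le> \<delta>2 * t" using c by simp
        moreover have "\<delta>2 * t \<le> \<delta>2' * t" using d2 tT0 T0 by (intro mult_right_mono) auto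
        moreover have "(1 - \<delta>2') * t = t - \<delta>2' * t" by (simp add: algebra_simps)
        ultimately have St: "(1 - \<delta>2') * t \<le> S" by linarith
        have gS: "g S \<le> (1+\<epsilon>) * g t" using g2[OF _ St S(2)] T0 tT0 by auto
        have xdec: "- x t - (- x S) \<ge> 0 * (t - S)"
        proof (rule mvt_bound[where \<Phi>' = "\<lambda>s. f (x s) - g s"])
          show "S \<le> t" using S by simp
          show "\<And>s. S \<le> s \<Longrightarrow> s \<le> t \<Longrightarrow> ((\<lambda>s. - x s) has_real_derivative f (x s) - g s) (at s)"
          proof -
            fix s assume "S \<le> s" "s \<le> t"
            then have "s > 0" using S T0 by auto
            from DERIV_minus[OF xder[OF this]] show "((\<lambda>s. - x s) has_real_derivative f (x s) - g s) (at s)" by simp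
          qed
          fix s assume s: "S < s" "s < t"
          have "g s > 0" using gpos s S T0 by auto
          moreover have "r s > 1 + \<epsilon>" using after s by auto
          ultimately have "f (x s) > (1 + \<epsilon>) * g s" by (simp add: r_def field_simps)
          moreover have "1 * g s \<le> (1+\<epsilon>) * g s" using eps \<open>g s > 0\<close> by (intro mult_right_mono) auto
          ultimately show "0 \<le> f (x s) - g s" by linarith
        qed
        then have xts: "x t \<le> x S" by simp
        have fxtS: "f (x t) \<le> (1+\<epsilon>) * f (x S)" using nm[OF xs(1)[OF tT0(1)] xts xs(2)[OF S(1)]] .
        moreover have "f (x S) \<le> (1+\<epsilon>) * g S" using S(3) gpos[of S] S T0 by (simp add: r_def field_simps)
        moreover have "(1+\<epsilon>) * g S \<le> (1+\<epsilon>) * ((1+\<epsilon>) * g t)" using gS eps by (intro mult_left_mono) auto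
        ultimately have "f (x S) \<le> (1+\<epsilon>) * ((1+\<epsilon>) * g t)" by linarith
        then have "(1+\<epsilon>) * f (x S) \<le> (1+\<epsilon>) * ((1+\<epsilon>) * ((1+\<epsilon>) * g t))" using eps by (intro mult_left_mono) auto
        with fxtS have "f (x t) \<le> (1+\<epsilon>) * ((1+\<epsilon>) * ((1+\<epsilon>) * g t))" by linarith
        then have "f (x t) \<le> (1+\<epsilon>)^3 * g t" by (simp add: power3_eq_cube algebra_simps)
        then show False using fxt by linarith
      qed
    qed
  qed
qed


lemma lower_bound:
  assumes G1: "\<And>\<epsilon>. \<epsilon> > 0 \<Longrightarrow> \<exists>T. \<forall>S t. T \<le> S \<longrightarrow> S \<le> t \<longrightarrow> g t \<le> (1+\<epsilon>) * g S"
    and eps: "\<epsilon> > 0"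
  shows "eventually (\<lambda>t. r t \<ge> 1 / (1+\<epsilon>)^3) at_top"
proof -
  obtain \<delta>1 where d1: "\<delta>1 > 0" and nm: "\<And>z u. 0 < z \<Longrightarrow> z \<le> u \<Longrightarrow> u \<le> \<delta>1 \<Longrightarrow> f z \<le> (1+\<epsilon>) * f u"
    using rv0_nearmono[OF rv fcont b1 eps] by auto
  obtain T1 where g1: "\<And>S t. T1 \<le> S \<Longrightarrow> S \<le> t \<Longrightarrow> g t \<le> (1+\<epsilon>) * g S"
    using G1[OF eps] by blast
  obtain Tx where Tx: "\<And>s. s \<ge> Tx \<Longrightarrow> x s \<le> min \<delta>1 (1/2)"
    using xsmall[of "min \<delta>1 (1/2)"] d1 by auto
  define T0 where "T0 = max (max Tx T1) 1"
  have T0: "T0 \<ge> Tx" "T0 \<ge> T1" "T0 \<ge> 1" by (auto simp: T0_def)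
  have xs: "0 < x s" "x s \<le> \<delta>1" if "s \<ge> T0" for s
    using Tx[of s] xpos[of s] that T0 by auto
  have "eventually (\<lambda>s. x s < x T0) at_top" using order_tendstoD(2)[OF xlim] xs(1)[of T0] by auto
  then obtain T3 where T3: "\<And>s. s \<ge> T3 \<Longrightarrow> x s < x T0" by (auto simp: eventually_at_top_linorder)
  have e1: "1 / (1+\<epsilon>) \<le> 1" using eps by simp
  show ?thesis
    using eventually_gt_at_top[of "max T0 T3"]
  proof eventually_elim
    case (elim t)
    have tT0: "t \<ge> T0" "T0 < t" "t \<ge> T3" using elim by auto
    show ?case
    proof (rule ccontr)
      assume "\<not> r t \<ge> 1 / (1+\<epsilon>)^3"
      then have rt: "r t < 1 / (1+\<epsilon>)^3" by simp
      have gt: "g t > 0" using gpos tT0 T0 by auto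
      define A where "A = {s\<in>{T0..t}. r s \<ge> 1 / (1 + \<epsilon>)}"
      have incr: "x b - x a \<ge> 0" if ab: "T0 \<le> a" "a \<le> b" and rl: "\<And>s. a < s \<Longrightarrow> s < b \<Longrightarrow> r s < 1 / (1+\<epsilon>)" for a b
      proof -
        have "x b - x a \<ge> 0 * (b - a)"
        proof (rule mvt_bound[where \<Phi>' = "\<lambda>s. - f (x s) + g s"])
          show "a \<le> b" using ab by simp
          show "\<And>s. a \<le> s \<Longrightarrow> s \<le> b \<Longrightarrow> (x has_real_derivative - f (x s) + g s) (at s)"
            using xder ab T0 by auto
          fix s assume s: "a < s" "s < b"
          have gs: "g s > 0" using gpos s ab T0 by auto
          have "r s < 1" using rl[OF s] e1 by linarith
          then have "f (x s) < g s" using gs by (simp add: r_def field_simps)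
          then show "0 \<le> - f (x s) + g s" by simp
        qed
        then show ?thesis by simp
      qed
      show False
      proof (cases "A = {}")
        case True
        have rl: "r s < 1 / (1 + \<epsilon>)" if "T0 < s" "s < t" for s
        proof (rule ccontr)
          assume "\<not> r s < 1 / (1 + \<epsilon>)"
          then have "s \<in> A" using that by (auto simp: A_def)
          then show False using True by simp
        qed
        have "x t - x T0 \<ge> 0"
          by (rule incr) (use tT0 rl in auto)
        then show False using T3[OF tT0(3)] by linarith
      next
        case False
        have clo: "closed A" unfolding A_def by (rule closed_sub) (use T0 in auto)
        have bdd: "bdd_above A" unfolding A_def by (auto intro: bdd_aboveI[of _ t])
        define S where "S = Sup A"
        have SA: "S \<in> A" unfolding S_def by (rule closed_contains_Sup[OF False bdd clo])
        then have S: "T0 \<le> S" "S \<le> t" "r S \<ge> 1 / (1 + \<epsilon>)" by (auto simp: A_def)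
        have after: "r s < 1 / (1 + \<epsilon>)" if "S < s" "s \<le> t" for s
        proof (rule ccontr)
          assume "\<not> r s < 1 / (1 + \<epsilon>)"
          then have "s \<in> A" using that S by (auto simp: A_def)
          then have "s \<le> S" unfolding S_def using bdd by (rule cSup_upper)
          then show False using that by simp
        qed
        have "x t - x S \<ge> 0" by (rule incr) (use S after in auto)
        then have xst: "x S \<le> x t" by simp
        have fS: "f (x S) \<le> (1+\<epsilon>) * f (x t)" using nm[OF xs(1)[OF S(1)] xst xs(2)[OF tT0(1)]] .
        have gS: "g S > 0" using gpos S T0 by auto
        have "g S \<le> (1+\<epsilon>) * f (x S)" using S(3) gS eps by (simp add: r_def field_simps)
        moreover have "(1+\<epsilon>) * f (x S) \<le> (1+\<epsilon>) * ((1+\<epsilon>) * f (x t))" using fS eps by (intro mult_left_mono) auto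
        ultimately have "g S \<le> (1+\<epsilon>) * ((1+\<epsilon>) * f (x t))" by linarith
        then have "(1+\<epsilon>) * g S \<le> (1+\<epsilon>) * ((1+\<epsilon>) * ((1+\<epsilon>) * f (x t)))" using eps by (intro mult_left_mono) auto
        moreover have "g t \<le> (1+\<epsilon>) * g S" using g1[OF _ S(2)] S T0 by auto
        ultimately have "g t \<le> (1+\<epsilon>)^3 * f (x t)" by (simp add: power3_eq_cube algebra_simps)
        then have "1 / (1+\<epsilon>)^3 \<le> f (x t) / g t" using gt eps by (simp add: field_simps)
        then show False using rt by (simp add: r_def)
      qed
    qed
  qed
qed


lemma r_tendsto:
  assumes G1: "\<And>\<epsilon>. \<epsilon> > 0 \<Longrightarrow> \<exists>T. \<forall>S t. T \<le> S \<longrightarrow> S \<le> t \<longrightarrow> g t \<le> (1+\<epsilon>) * g S"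
    and G2: "\<And>\<epsilon>. \<epsilon> > 0 \<Longrightarrow> \<exists>\<delta>>0. \<exists>T. \<forall>S t. T \<le> t \<longrightarrow> (1-\<delta>)*t \<le> S \<longrightarrow> S \<le> t \<longrightarrow> g S \<le> (1+\<epsilon>) * g t"
  shows "((\<lambda>t. f (x t) / g t) \<longlongrightarrow> 1) at_top"
proof -
  have "((\<lambda>t. r t) \<longlongrightarrow> 1) at_top"
  proof (rule tendstoI)
    fix e :: real assume e: "e > 0"
    define \<epsilon> where "\<epsilon> = min 1 (e/8)"
    have eps: "\<epsilon> > 0" "\<epsilon> \<le> 1" "8 * \<epsilon> \<le> e" using e by (auto simp: \<epsilon>_def)
    have p3: "(1+\<epsilon>)^3 \<le> 1 + 7*\<epsilon>"
    proof -
      have "\<epsilon>^2 \<le> \<epsilon>" using eps by (simp add: power2_eq_square mult_le_cancel_left1)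
      moreover have "\<epsilon>^3 \<le> \<epsilon>" using eps by (simp add: power3_eq_cube) (metis mult_le_one mult.assoc mult_le_cancel_left1 less_le_not_le mult_nonneg_nonneg order.strict_implies_order)
      moreover have "(1+\<epsilon>)^3 = 1 + 3*\<epsilon> + 3*\<epsilon>^2 + \<epsilon>^3" by (simp add: power3_eq_cube power2_eq_square algebra_simps)
      ultimately show ?thesis by linarith
    qed
    have pos3: "(1+\<epsilon>)^3 > 0" using eps by simp
    have low: "1 / (1+\<epsilon>)^3 > 1 - e"
    proof -
      have "(1 - e) * (1+\<epsilon>)^3 \<le> (1 - e) * (1 + 7*\<epsilon>) \<or> 1 - e < 0"
        using p3 by (cases "1 - e \<ge> 0") (auto intro: mult_left_mono)
      moreover have "(1 - e) * (1 + 7*\<epsilon>) < 1" using eps e by (simp add: algebra_simps) (smt (verit) mult_pos_pos)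
      moreover have "(1 - e) * (1+\<epsilon>)^3 < 1 \<Longrightarrow> ?thesis" using pos3 by (simp add: field_simps)
      moreover have "1 - e < 0 \<Longrightarrow> ?thesis" using pos3 by (smt (verit) divide_pos_pos)
      ultimately show ?thesis by linarith
    qed
    have up: "(1+\<epsilon>)^3 < 1 + e" using p3 eps by linarith
    have U: "eventually (\<lambda>t. r t \<le> (1+\<epsilon>)^3) at_top"
      by (rule upper_bound[where \<epsilon>=\<epsilon>]) (use G2 eps(1) in auto)
    have L: "eventually (\<lambda>t. r t \<ge> 1 / (1+\<epsilon>)^3) at_top"
      by (rule lower_bound[where \<epsilon>=\<epsilon>]) (use G1 eps(1) in auto)
    show "eventually (\<lambda>t. dist (r t) 1 < e) at_top"
      using U L
    proof eventually_elim
      case (elim t)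
      then show ?case using up low by (simp add: dist_real_def abs_less_iff)
    qed
  qed
  then show ?thesis by (simp add: r_def)
qed

end


lemma x_positive:
  fixes f g x :: "real \<Rightarrow> real"
  assumes fneg: "\<And>y. y \<le> 0 \<Longrightarrow> f y \<le> 0" and gpos: "\<And>t. t > 0 \<Longrightarrow> g t > 0"
    and xc: "continuous_on {0..} x" and x0: "x 0 > 0"
    and xder: "\<And>t. t > 0 \<Longrightarrow> (x has_real_derivative (- f (x t) + g t)) (at t)"
    and t1: "t1 \<ge> 0"
  shows "x t1 > 0"
proof (rule ccontr)
  assume "\<not> x t1 > 0"
  then have xt1: "x t1 \<le> 0" by simp
  define A where "A = {s\<in>{0..t1}. x s \<le> 0}"
  have ne: "A \<noteq> {}" using xt1 t1 by (auto simp: A_def)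
  have "closed ({0..t1} \<inter> x -` {..0})"
    by (rule continuous_closed_preimage[OF continuous_on_subset[OF xc]]) auto
  moreover have "A = {0..t1} \<inter> x -` {..0}" by (auto simp: A_def)
  ultimately have clo: "closed A" by simp
  have bdd: "bdd_below A" by (auto simp: A_def intro: bdd_belowI[of _ 0])
  define t0 where "t0 = Inf A"
  have t0A: "t0 \<in> A" unfolding t0_def by (rule closed_contains_Inf[OF ne bdd clo])
  then have t0: "0 \<le> t0" "t0 \<le> t1" "x t0 \<le> 0" by (auto simp: A_def)
  have t0pos: "t0 > 0" using t0 x0 by (metis less_eq_real_def not_le)
  have l: "- f (x t0) + g t0 > 0" using fneg[OF t0(3)] gpos[OF t0pos] by linarith
  obtain d where d: "d > 0" "\<And>h. h > 0 \<Longrightarrow> h < d \<Longrightarrow> x (t0 - h) < x t0"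
    using DERIV_pos_inc_left[OF xder[OF t0pos] l] by blast
  define h where "h = min (d/2) (t0/2)"
  have h: "h > 0" "h < d" "h < t0" using d t0pos by (auto simp: h_def)
  have "x (t0 - h) < x t0" using d h by auto
  then have "t0 - h \<in> A" using h t0 by (auto simp: A_def)
  then have "t0 \<le> t0 - h" unfolding t0_def using bdd by (rule cInf_lower)
  then show False using h by simp
qed

lemma ratio_bound:
  fixes g \<gamma> :: "real \<Rightarrow> real"
  assumes gpos: "\<And>t. t > 0 \<Longrightarrow> g t > 0" and lim: "((\<lambda>t. g t / \<gamma> t) \<longlongrightarrow> 1) at_top"
    and e: "0 < e" "e < 1"
  shows "\<exists>T\<ge>1. \<forall>t\<ge>T. (1-e) * \<gamma> t \<le> g t \<and> g t \<le> (1+e) * \<gamma> t \<and> \<gamma> t > 0"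
proof -
  have "eventually (\<lambda>t. dist (g t / \<gamma> t) 1 < e) at_top" using tendstoD[OF lim e(1)] .
  then obtain T0 where T0: "\<And>t. t \<ge> T0 \<Longrightarrow> \<bar>g t / \<gamma> t - 1\<bar> < e"
    by (auto simp: eventually_at_top_linorder dist_real_def)
  show ?thesis
  proof (rule exI[of _ "max T0 1"], intro conjI allI impI)
    fix t assume t: "max T0 1 \<le> t"
    have gt: "g t > 0" using gpos t by auto
    have q: "\<bar>g t / \<gamma> t - 1\<bar> < e" using T0 t by auto
    then have q1: "g t / \<gamma> t > 1 - e" "g t / \<gamma> t < 1 + e" by auto
    have gam: "\<gamma> t > 0"
    proof (rule ccontr)
      assume "\<not> \<gamma> t > 0"
      then have "g t / \<gamma> t \<le> 0" using gt by (simp add: divide_nonneg_nonpos less_imp_le)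
      then show False using q1 e by linarith
    qed
    show "\<gamma> t > 0" by (rule gam)
    show "(1-e) * \<gamma> t \<le> g t" using q1 gam by (simp add: field_simps)
    show "g t \<le> (1+e) * \<gamma> t" using q1 gam by (simp add: field_simps)
  qed simp
qed

lemma G1_theta0:
  fixes g \<gamma> :: "real \<Rightarrow> real"
  assumes gpos: "\<And>t. t > 0 \<Longrightarrow> g t > 0" and lim: "((\<lambda>t. g t / \<gamma> t) \<longlongrightarrow> 1) at_top"
    and dec: "\<forall>s t. 0 \<le> s \<longrightarrow> s \<le> t \<longrightarrow> \<gamma> t \<le> \<gamma> s"
    and eps: "\<epsilon> > 0"
  shows "\<exists>T. \<forall>S t. T \<le> S \<longrightarrow> S \<le> t \<longrightarrow> g t \<le> (1+\<epsilon>) * g S"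
proof -
  define e where "e = \<epsilon> / (2 + \<epsilon>)"
  have e: "0 < e" "e < 1" using eps by (auto simp: e_def field_simps)
  have eid: "1 + e = (1 + \<epsilon>) * (1 - e)" using eps by (simp add: e_def field_simps)
  obtain T where T: "T \<ge> 1" "\<And>t. t \<ge> T \<Longrightarrow> (1-e) * \<gamma> t \<le> g t \<and> g t \<le> (1+e) * \<gamma> t \<and> \<gamma> t > 0"
    using ratio_bound[OF gpos lim e] by blast
  show ?thesis
  proof (rule exI[of _ T], intro allI impI)
    fix S t assume St: "T \<le> S" "S \<le> t"
    have "(1-e) * g t \<le> (1-e) * ((1+e) * \<gamma> t)" using T(2)[of t] St e by (intro mult_left_mono) auto
    also have "\<dots> = (1+e) * ((1-e) * \<gamma> t)" by simp
    also have "\<dots> \<le> (1+e) * ((1-e) * \<gamma> S)" using dec St T e by (intro mult_left_mono) auto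
    also have "\<dots> \<le> (1+e) * g S" using T(2)[of S] St e by (intro mult_left_mono) auto
    also have "\<dots> = (1-e) * ((1 + \<epsilon>) * g S)" using eid by simp
    finally show "g t \<le> (1+\<epsilon>) * g S" using e by simp
  qed
qed

lemma G2_from_G1:
  fixes g :: "real \<Rightarrow> real"
  assumes gpos: "\<And>t. t > 0 \<Longrightarrow> g t > 0"
    and G1: "\<And>\<epsilon>. \<epsilon> > 0 \<Longrightarrow> \<exists>T. \<forall>S t. T \<le> S \<longrightarrow> S \<le> t \<longrightarrow> g t \<le> (1+\<epsilon>) * g S"
    and rv: "RVinf g 0" and eps: "\<epsilon> > 0"
  shows "\<exists>\<delta>>0. \<exists>T. \<forall>S t. T \<le> t \<longrightarrow> (1-\<delta>)*t \<le> S \<longrightarrow> S \<le> t \<longrightarrow> g S \<le> (1+\<epsilon>) * g t"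
proof -
  define a where "a = min \<epsilon> 1 / 3"
  have a: "a > 0" "(1+a)*(1+a) \<le> 1 + \<epsilon>"
  proof -
    show "a > 0" using eps by (simp add: a_def)
    have "a \<le> 1/3" "3*a \<le> \<epsilon>" by (auto simp: a_def)
    moreover have "(1+a)*(1+a) = 1 + 2*a + a*a" by (simp add: algebra_simps)
    moreover have "a*a \<le> a" using \<open>a > 0\<close> \<open>a \<le> 1/3\<close> by (simp add: mult_le_cancel_left1)
    ultimately show "(1+a)*(1+a) \<le> 1 + \<epsilon>" by linarith
  qed
  obtain T1 where T1: "\<And>S t. T1 \<le> S \<Longrightarrow> S \<le> t \<Longrightarrow> g t \<le> (1+a) * g S" using G1[OF a(1)] by blast
  from rv have A: "\<forall>l>0. ((\<lambda>t. g (l * t) / g t) \<longlongrightarrow> l powr 0) at_top" by (simp add: RVinf_def)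
  have l2: "((\<lambda>t. g (t/2) / g t) \<longlongrightarrow> 1) at_top" using A[rule_format, of "1/2"] by simp
  have "eventually (\<lambda>t. g (t/2) / g t < 1 + a) at_top" using order_tendstoD(2)[OF l2] a by auto
  then obtain T2 where T2: "\<And>t. t \<ge> T2 \<Longrightarrow> g (t/2) / g t < 1 + a" by (auto simp: eventually_at_top_linorder)
  show ?thesis
  proof (rule exI[of _ "1/2"], rule conjI, simp, rule exI[of _ "max (max (2*T1) T2) 1"], intro allI impI)
    fix S t :: real assume St: "max (max (2*T1) T2) 1 \<le> t" "(1 - 1/2) * t \<le> S" "S \<le> t"
    have gt: "g t > 0" using gpos St by auto
    have A1: "g S \<le> (1+a) * g (t/2)" using T1[of "t/2" S] St by auto
    have "g (t/2) \<le> (1+a) * g t" using T2[of t] St gt by (simp add: field_simps)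
    then have A2: "(1+a) * g (t/2) \<le> (1+a) * ((1+a) * g t)" using a by (intro mult_left_mono) auto
    have A3: "((1+a)*(1+a)) * g t \<le> (1+\<epsilon>) * g t" using a gt by (intro mult_right_mono) auto
    show "g S \<le> (1+\<epsilon>) * g t" using A1 A2 A3 by (simp add: mult.assoc)
  qed
qed


lemma rvinf_pos: "RVinf g a \<Longrightarrow> t > 0 \<Longrightarrow> g t > 0" by (auto simp: RVinf_def)

lemma kg_unif:
  fixes g :: "real \<Rightarrow> real"
  assumes gcont: "continuous_on {0<..} g" and rv: "RVinf g (-\<theta>)" and eta: "\<eta> > 0"
  shows "\<exists>N\<ge>0. \<forall>a s. N \<le> a \<longrightarrow> 0 \<le> s \<longrightarrow> s \<le> 1 \<longrightarrow>
     \<bar>(ln (g (exp (a+s))) + \<theta>*(a+s)) - (ln (g (exp a)) + \<theta>*a)\<bar> \<le> \<eta>"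
proof -
  define k where "k v = ln (g (exp (max v 0))) + \<theta> * max v 0" for v
  have kc: "continuous_on UNIV k"
    unfolding k_def
    by (intro continuous_intros continuous_on_compose2[OF gcont])
       (auto simp: rvinf_pos[OF rv] dual_order.strict_implies_not_eq)
  have kl: "((\<lambda>v. k (v+s) - k v) \<longlongrightarrow> 0) at_top" for s
  proof -
    have r: "((\<lambda>t. g (exp s * t) / g t) \<longlongrightarrow> exp s powr (-\<theta>)) at_top"
      using rv by (auto simp: RVinf_def)
    have r2: "((\<lambda>v. g (exp s * exp v) / g (exp v)) \<longlongrightarrow> exp s powr (-\<theta>)) at_top"
      by (rule filterlim_compose[OF r exp_at_top])
    have r3: "((\<lambda>v. ln (g (exp s * exp v) / g (exp v)) + \<theta> * s) \<longlongrightarrow> ln (exp s powr (-\<theta>)) + \<theta> * s) at_top"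
      by (intro tendsto_intros r2) auto
    have l: "ln (exp s powr (-\<theta>)) + \<theta> * s = 0" by (simp add: ln_powr)
    have ev: "eventually (\<lambda>v. ln (g (exp s * exp v) / g (exp v)) + \<theta> * s = k (v+s) - k v) at_top"
      using eventually_ge_at_top[of "\<bar>s\<bar>"]
    proof eventually_elim
      case (elim v)
      then have m: "max v 0 = v" "max (v+s) 0 = v + s" by auto
      have "exp s * exp v = exp (v+s)" by (simp add: exp_add[symmetric] add.commute)
      moreover have "g (exp (v+s)) > 0" "g (exp v) > 0" using rvinf_pos[OF rv] by auto
      ultimately show ?case unfolding k_def m by (simp add: ln_div algebra_simps)
    qed
    show ?thesis using tendsto_cong[OF ev] r3 l by simp
  qed
  have "eventually (\<lambda>v. \<forall>s\<in>{0..1}. \<bar>k (v+s) - k v\<bar> \<le> \<eta>) at_top"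
    by (rule uct_additive[OF kc kl eta])
  then obtain N where N: "\<And>v s. v \<ge> N \<Longrightarrow> s \<in> {0..1} \<Longrightarrow> \<bar>k (v+s) - k v\<bar> \<le> \<eta>"
    unfolding eventually_at_top_linorder by blast
  show ?thesis
  proof (rule exI[of _ "max N 0"], intro conjI allI impI)
    fix a s :: real assume as: "max N 0 \<le> a" "0 \<le> s" "s \<le> 1"
    have m: "max a 0 = a" "max (a+s) 0 = a + s" using as by auto
    have "\<bar>k (a+s) - k a\<bar> \<le> \<eta>" using N[of a s] as by auto
    then show "\<bar>(ln (g (exp (a+s))) + \<theta>*(a+s)) - (ln (g (exp a)) + \<theta>*a)\<bar> \<le> \<eta>"
      unfolding k_def m .
  qed simp
qed


lemma G1_thetapos:
  fixes g :: "real \<Rightarrow> real"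
  assumes gcont: "continuous_on {0<..} g" and rv: "RVinf g (-\<theta>)" and th: "\<theta> > 0" and eps: "\<epsilon> > 0"
  shows "\<exists>T. \<forall>S t. T \<le> S \<longrightarrow> S \<le> t \<longrightarrow> g t \<le> (1+\<epsilon>) * g S"
proof -
  define \<eta> where "\<eta> = min \<theta> (ln (1+\<epsilon>))"
  have eta: "\<eta> > 0" "\<eta> \<le> \<theta>" "\<eta> \<le> ln (1+\<epsilon>)" using th eps by (auto simp: \<eta>_def)
  define K where "K a = ln (g (exp a)) + \<theta> * a" for a
  obtain N where N: "N \<ge> 0" "\<And>a s. N \<le> a \<Longrightarrow> 0 \<le> s \<Longrightarrow> s \<le> 1 \<Longrightarrow> \<bar>K (a+s) - K a\<bar> \<le> \<eta>"
    using kg_unif[OF gcont rv eta(1)] unfolding K_def by blast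
  have step: "K b - K a \<le> \<eta>" if "N \<le> a" "a \<le> b" "b \<le> a + 1" for a b
    using N(2)[of a "b - a"] that by auto
  have chain: "\<forall>a b. N \<le> a \<longrightarrow> a \<le> b \<longrightarrow> b \<le> a + (real n + 1) \<longrightarrow> K b - K a \<le> \<eta> * (real n + 1)" for n
  proof (induction n)
    case 0 then show ?case using step by auto
  next
    case (Suc n)
    show ?case
    proof (intro allI impI)
      fix a b assume ab: "N \<le> a" "a \<le> b" "b \<le> a + (real (Suc n) + 1)"
      show "K b - K a \<le> \<eta> * (real (Suc n) + 1)"
      proof (cases "b \<le> a + 1")
        case True
        then have "K b - K a \<le> \<eta>" using step ab by auto
        moreover have "\<eta> \<le> \<eta> * (real (Suc n) + 1)" using eta by simp
        ultimately show ?thesis by linarith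
      next
        case False
        have "K b - K (a+1) \<le> \<eta> * (real n + 1)" using Suc.IH ab False by auto
        moreover have "K (a+1) - K a \<le> \<eta>" using step[of a "a+1"] ab by auto
        ultimately show ?thesis by (simp add: algebra_simps)
      qed
    qed
  qed
  show ?thesis
  proof (rule exI[of _ "exp N"], intro allI impI)
    fix S t assume St: "exp N \<le> S" "S \<le> t"
    have Spos: "S > 0" "t > 0" using St exp_gt_zero[of N] by linarith+
    define a where "a = ln S"
    define b where "b = ln t"
    have aN: "N \<le> a" using St Spos unfolding a_def by (metis ln_exp ln_le_cancel_iff exp_gt_zero)
    have ab: "a \<le> b" using St Spos unfolding a_def b_def by simp
    define n where "n = nat \<lfloor>b - a\<rfloor>"
    have n1: "real n \<le> b - a" using ab by (simp add: n_def)
    have n2: "b \<le> a + (real n + 1)" using ab by (simp add: n_def) linarith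
    have "K b - K a \<le> \<eta> * (real n + 1)" using chain[of n] aN ab n2 by blast
    also have "\<dots> \<le> \<eta> * (b - a + 1)" using eta n1 by (intro mult_left_mono) auto
    finally have Kab: "K b - K a \<le> \<eta> * (b - a) + \<eta>" by (simp add: algebra_simps)
    have "\<eta> * (b - a) \<le> \<theta> * (b - a)" using eta ab by (intro mult_right_mono) auto
    moreover have "K b - K a = ln (g t) - ln (g S) + \<theta> * (b - a)"
      using Spos by (simp add: K_def a_def b_def algebra_simps)
    ultimately have "ln (g t) - ln (g S) \<le> \<eta>" using Kab by linarith
    then have "ln (g t) \<le> ln (1+\<epsilon>) + ln (g S)" using eta by linarith
    also have "\<dots> = ln ((1+\<epsilon>) * g S)" using eps rvinf_pos[OF rv Spos(1)] by (simp add: ln_mult)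
    finally show "g t \<le> (1+\<epsilon>) * g S"
      using rvinf_pos[OF rv Spos(1)] rvinf_pos[OF rv Spos(2)] eps by (subst (asm) ln_le_cancel_iff) auto
  qed
qed

lemma G2_thetapos:
  fixes g :: "real \<Rightarrow> real"
  assumes gcont: "continuous_on {0<..} g" and rv: "RVinf g (-\<theta>)" and th: "\<theta> > 0" and eps: "\<epsilon> > 0"
  shows "\<exists>\<delta>>0. \<exists>T. \<forall>S t. T \<le> t \<longrightarrow> (1-\<delta>)*t \<le> S \<longrightarrow> S \<le> t \<longrightarrow> g S \<le> (1+\<epsilon>) * g t"
proof -
  define \<eta> where "\<eta> = ln (1+\<epsilon>) / 2"
  have eta: "\<eta> > 0" using eps by (simp add: \<eta>_def)
  define K where "K a = ln (g (exp a)) + \<theta> * a" for a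
  obtain N where N: "N \<ge> 0" "\<And>a s. N \<le> a \<Longrightarrow> 0 \<le> s \<Longrightarrow> s \<le> 1 \<Longrightarrow> \<bar>K (a+s) - K a\<bar> \<le> \<eta>"
    using kg_unif[OF gcont rv eta] unfolding K_def by blast
  define \<delta> where "\<delta> = min (1/2) (\<eta> / (2*\<theta>))"
  have d: "\<delta> > 0" "\<delta> \<le> 1/2" using eta th by (auto simp: \<delta>_def)
  have "\<delta> \<le> \<eta> / (2*\<theta>)" by (simp add: \<delta>_def)
  then have "2 * \<theta> * \<delta> \<le> 2 * \<theta> * (\<eta> / (2*\<theta>))" using th by (intro mult_left_mono) auto
  then have d3: "2 * \<theta> * \<delta> \<le> \<eta>" using th by simp
  show ?thesis
  proof (rule exI[of _ \<delta>], rule conjI[OF d(1)], rule exI[of _ "2 * exp N"], intro allI impI)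
    fix S t assume St: "2 * exp N \<le> t" "(1-\<delta>)*t \<le> S" "S \<le> t"
    have tpos: "t > 0" using St by (smt (verit) exp_gt_zero)
    have "t/2 \<le> (1-\<delta>)*t" using d tpos by (simp add: field_simps)
    then have S2: "t/2 \<le> S" using St by linarith
    have Spos: "S > 0" using S2 tpos by linarith
    define a where "a = ln S"
    define s where "s = ln t - ln S"
    have aN: "N \<le> a"
    proof -
      have "exp N \<le> S" using St S2 by linarith
      then show ?thesis unfolding a_def using Spos by (metis ln_exp ln_le_cancel_iff exp_gt_zero)
    qed
    have s0: "0 \<le> s" using St Spos by (simp add: s_def)
    have tS: "t / S \<le> 1 / (1-\<delta>)" using St Spos d by (simp add: field_simps)
    have se: "s = ln (t / S)" using Spos tpos by (simp add: s_def ln_div)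
    have s_le: "s \<le> t / S - 1" unfolding se by (rule ln_le_minus_one) (use Spos tpos in simp)
    have "1 / (1-\<delta>) - 1 \<le> 2 * \<delta>" using d by (simp add: field_simps)
    then have s2: "s \<le> 2 * \<delta>" using s_le tS by linarith
    then have s1: "s \<le> 1" using d by linarith
    have "\<bar>K (a+s) - K a\<bar> \<le> \<eta>" using N(2)[OF aN s0 s1] .
    moreover have "a + s = ln t" by (simp add: a_def s_def)
    moreover have "K (ln t) - K a = ln (g t) - ln (g S) + \<theta> * s"
      using Spos tpos by (simp add: K_def a_def s_def algebra_simps)
    moreover have "\<theta> * s \<le> \<theta> * (2*\<delta>)" using th s2 by (intro mult_left_mono) auto
    ultimately have "ln (g S) - ln (g t) \<le> 2 * \<eta>" using d3 by (simp add: abs_le_iff)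
    then have "ln (g S) \<le> ln (1+\<epsilon>) + ln (g t)" by (simp add: \<eta>_def)
    also have "\<dots> = ln ((1+\<epsilon>) * g t)" using eps rvinf_pos[OF rv tpos] by (simp add: ln_mult)
    finally show "g S \<le> (1+\<epsilon>) * g t"
      using rvinf_pos[OF rv Spos] rvinf_pos[OF rv tpos] eps by (subst (asm) ln_le_cancel_iff) auto
  qed
qed


theorem theorem4:
  fixes f g x :: "real \<Rightarrow> real" and \<xi> \<beta> \<theta> :: real
  assumes f_cont: "continuous_on UNIV f"
    and f_lip: "loc_lipschitz f"
    and f0: "f 0 = 0"
    and f_sign: "\<And>y. y \<noteq> 0 \<Longrightarrow> y * f y > 0"
    and g_cont: "continuous_on {0..} g"
    and g_pos: "\<And>t. t > 0 \<Longrightarrow> g t > 0"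
    and xi_pos: "\<xi> > 0"
    and F_lim: "filterlim (Fint f) at_top (at_right 0)"
    and x_cont: "continuous_on {0..} x"
    and x_init: "x 0 = \<xi>"
    and x_ode: "\<And>t. t > 0 \<Longrightarrow> (x has_real_derivative (- f (x t) + g t)) (at t)"
    and g_big: "filterlim (\<lambda>t. g t / f (Finv f t)) at_top at_top"
    and f_RV: "RV0 f \<beta>" and beta_gt: "\<beta> > 1"
    and g_RV: "RVinf g (- \<theta>)" and theta_nonneg: "\<theta> \<ge> 0"
    and x_lim: "(x \<longlongrightarrow> 0) at_top"
  shows "(\<theta> > 0 \<longrightarrow> ((\<lambda>t. f (x t) / g t) \<longlongrightarrow> 1) at_top) \<and>
         ((\<theta> = 0 \<and> (\<exists>\<gamma>1 :: real \<Rightarrow> real.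
              (\<forall>s t. 0 \<le> s \<longrightarrow> s \<le> t \<longrightarrow> \<gamma>1 t \<le> \<gamma>1 s) \<and>
              ((\<lambda>t. g t / \<gamma>1 t) \<longlongrightarrow> 1) at_top))
           \<longrightarrow> ((\<lambda>t. f (x t) / g t) \<longlongrightarrow> 1) at_top)"
proof -
  have fcont: "continuous_on {0<..} f" using continuous_on_subset[OF f_cont] by auto
  have fpos: "f w > 0" if "w > 0" for w
    using f_sign[of w] that by (simp add: zero_less_mult_iff)
  have fneg: "f y \<le> 0" if "y \<le> 0" for y
  proof (cases "y = 0")
    case True then show ?thesis using f0 by simp
  next
    case False
    then have "y * f y > 0" using f_sign by auto
    then show ?thesis using that False by (simp add: zero_less_mult_iff)
  qed
  have gcont: "continuous_on {0<..} g" by (rule continuous_on_subset[OF g_cont]) auto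
  have xpos: "x t > 0" if "t > 0" for t
    by (rule x_positive[OF fneg g_pos x_cont _ x_ode]) (use that x_init xi_pos in auto)
  interpret D: Dyn f g x \<beta>
    by unfold_locales (use fcont fpos f_RV beta_gt F_lim gcont g_pos xpos x_ode x_lim g_big in auto)
  show ?thesis
  proof (intro conjI impI)
    assume th: "\<theta> > 0"
    show "((\<lambda>t. f (x t) / g t) \<longlongrightarrow> 1) at_top"
    proof (rule D.r_tendsto)
      fix \<epsilon> :: real assume "\<epsilon> > 0"
      then show "\<exists>T. \<forall>S t. T \<le> S \<longrightarrow> S \<le> t \<longrightarrow> g t \<le> (1+\<epsilon>) * g S"
        by (rule G1_thetapos[OF gcont g_RV th])
    next
      fix \<epsilon> :: real assume "\<epsilon> > 0"
      then show "\<exists>\<delta>>0. \<exists>T. \<forall>S t. T \<le> t \<longrightarrow> (1-\<delta>)*t \<le> S \<longrightarrow> S \<le> t \<longrightarrow> g S \<le> (1+\<epsilon>) * g t"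
        by (rule G2_thetapos[OF gcont g_RV th])
    qed
  next
    assume A: "\<theta> = 0 \<and> (\<exists>\<gamma>1 :: real \<Rightarrow> real.
              (\<forall>s t. 0 \<le> s \<longrightarrow> s \<le> t \<longrightarrow> \<gamma>1 t \<le> \<gamma>1 s) \<and>
              ((\<lambda>t. g t / \<gamma>1 t) \<longlongrightarrow> 1) at_top)"
    then obtain \<gamma>1 :: "real \<Rightarrow> real" where dec: "\<forall>s t. 0 \<le> s \<longrightarrow> s \<le> t \<longrightarrow> \<gamma>1 t \<le> \<gamma>1 s"
      and lim: "((\<lambda>t. g t / \<gamma>1 t) \<longlongrightarrow> 1) at_top" by blast
    have rv0: "RVinf g 0" using g_RV A by simp
    have G1: "\<And>\<epsilon>. \<epsilon> > 0 \<Longrightarrow> \<exists>T. \<forall>S t. T \<le> S \<longrightarrow> S \<le> t \<longrightarrow> g t \<le> (1+\<epsilon>) * g S"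
      by (rule G1_theta0[OF g_pos lim dec])
    show "((\<lambda>t. f (x t) / g t) \<longlongrightarrow> 1) at_top"
    proof (rule D.r_tendsto)
      fix \<epsilon> :: real assume "\<epsilon> > 0"
      then show "\<exists>T. \<forall>S t. T \<le> S \<longrightarrow> S \<le> t \<longrightarrow> g t \<le> (1+\<epsilon>) * g S" by (rule G1)
    next
      fix \<epsilon> :: real assume e: "\<epsilon> > 0"
      show "\<exists>\<delta>>0. \<exists>T. \<forall>S t. T \<le> t \<longrightarrow> (1-\<delta>)*t \<le> S \<longrightarrow> S \<le> t \<longrightarrow> g S \<le> (1+\<epsilon>) * g t"
        by (rule G2_from_G1[OF g_pos G1 rv0 e])
    qed
  qed
qed


end
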